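(* Let $\Omega\subset\mathbb{R}^d$ be a bounded Lipschitz domain, $N\in\mathbb{N}$, $D=Nd$, $\mathcal{D}=\mathbb{R}^D$, and write $\vec{q}=(\vec{q}_1,\dots,\vec{q}_N)$ with $\vec{q}_n\in\mathbb{R}^d$. Let $\mathcal{Z}$ be the set of block-diagonal symmetric positive definite $D\times D$ matrices with $N$ blocks of size $d\times d$, $\tilde{\mathcal{Z}}$ the space of block-diagonal symmetric $D\times D$ matrices with $N$ blocks of size $d\times d$, and $\Phi(\mathcal{C},\vec{q})=\exp(-\tfrac12\vec{q}^\top\mathcal{C}^{-1}\vec{q})/\sqrt{(2\pi)^D\det\mathcal{C}}$. Let $\mathcal{M}_\Phi=\{f\in\mathcal{H}: f(\vec{x},\vec{q})=\Phi(\mathcal{C}(\vec{x}),\vec{q}),\ \mathcal{C}:\Omega\to\mathcal{Z}\}$ and consider $f\in\mathcal{M}_\Phi$ with $f(\vec{x},\vec{q})=\Phi(\mathcal{C}(\vec{x}),\vec{q})$, $\mathcal{C}(\vec{x})\in\mathcal{Z}$ (smooth in $\vec{x}$). Then: (i) The tangent space of $\mathcal{M}_\Phi$ at $f$ is $$T_f\mathcal{M}_\Phi=\Big\{\varphi\in\mathcal{H}:\ \varphi(\vec{x},\vec{q})=\big(\vec{q}^\top A(\vec{x})\vec{q}-\operatorname{tr}(A(\vec{x})\mathcal{C}(\vec{x}))\big)f(\vec{x},\vec{q}),\ A:\Omega\to\tilde{\mathcal{Z}}\Big\}.$$ (ii) The configurational operator $\mathcal{L}_{\vec{q}}(t)\varphi=-\operatorname{div}_{\vec{q}}\big(M(t)\vec{q}\,\varphi+\tfrac{1}{2\mathrm{De}}(\Lambda\otimes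 I_d)\nabla_{\vec{q}}\varphi\big)$ satisfies $\mathcal{L}_{\vec{q}}(t)f\in T_f\mathcal{M}_\Phi$; more precisely $$\mathcal{L}_{\vec{q}}(t)f=\big(\vec{q}^\top A_{\vec{q}}(t)\vec{q}-\operatorname{tr}(A_{\vec{q}}(t)\mathcal{C})\big)f,$$ where $A_{\vec{q}}(t,\vec{x})\in\tilde{\mathcal{Z}}$ is $$A_{\vec{q}}(t,\vec{x})=\tfrac12\mathcal{C}(\vec{x})^{-1}\Big(M(t,\vec{x})\mathcal{C}(\vec{x})+\mathcal{C}(\vec{x})M(t,\vec{x})^\top-\tfrac{1}{\mathrm{De}}\Lambda\otimes I_d\Big)\mathcal{C}(\vec{x})^{-1}.$$ (iii) The spatial operator $\mathcal{L}_{\vec{x}}(t)=\vec{u}(t)\cdot\nabla_{\vec{x}}-\varepsilon\Delta_{\vec{x}}$ satisfies $$\mathcal{L}_{\vec{x}}(t)f=\big(\vec{q}^\top A_{\vec{x}}(t)\vec{q}-\operatorname{tr}(A_{\vec{x}}(t)\mathcal{C})\big)f+\varepsilon\rho f,$$ where $A_{\vec{x}}(t,\vec{x})=\tfrac12\mathcal{C}(\vec{x})^{-1}\big(\mathcal{L}_{\vec{x}}(t)\mathcal{C}(\vec{x})\big)\mathcal{C}(\vec{x})^{-1}\in\tilde{\mathcal{Z}}$ (with $\mathcal{L}_{\vec{x}}(t)$ acting entrywise on $\mathcal{C}$) and $$\rho(\vec{x},\vec{q})=\sum_{i=1}^d\vec{q}^\top\big(\mathcal{C}^{-1}\partial_{x_i}\mathcal{C}\big)^2\mathcal{C}^{-1}\vec{q}-\tfrac12\sum_{i=1}^d\operatorname{tr}\big((\mathcal{C}^{-1}\partial_{x_i}\mathcal{C})^2\big)-\tfrac14\sum_{i=1}^d\Big[\vec{q}^\top\mathcal{C}^{-1}\partial_{x_i}\mathcal{C}\,\mathcal{C}^{-1}\vec{q}-\operatorname{tr}(\mathcal{C}^{-1}\partial_{x_i}\mathcal{C})\Big]^2,$$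 with $\mathcal{C}=\mathcal{C}(\vec{x})$. In particular, if $\varepsilon=0$ then $\mathcal{L}_{\vec{x}}(t)f\in T_f\mathcal{M}_\Phi$.
   Context: $\mathcal{H}$ is the Maxwellian-weighted Sobolev space of functions on $\Omega\times\mathcal{D}$ with norm $\big(\int_\Omega\int_{\mathcal{D}}(|\varphi|^2+|\nabla_{\vec{x}}\varphi|^2+|\nabla_{\vec{q}}\varphi|^2)e^{-|\vec{q}|^2/2}\,\mathrm{d}\vec{q}\,\mathrm{d}\vec{x}\big)^{1/2}$. $\vec{u}(t,\vec{x})\in\mathbb{R}^d$ is a given smooth velocity field, $\nabla_{\vec{x}}\vec{u}$ its Jacobian matrix, $\varepsilon>0$ (or $\ge0$) a diffusion coefficient, $\mathrm{De}>0$ the Deborah number. $R=\mathrm{tridiag}(-1,2,-1)\in\mathbb{R}^{N\times N}$ is the Rouse matrix with eigendecomposition $R=Q^\top\Lambda Q$, $\Lambda=\mathrm{diag}(\lambda_1,\dots,\lambda_N)$, and $M(t,\vec{x})=\frac{1}{2\mathrm{De}}\Lambda\otimes I_d-I_N\otimes\nabla_{\vec{x}}\vec{u}(t,\vec{x})\in\mathbb{R}^{D\times D}$. $I_k$ denotes the $k\times k$ identity. *)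

theory Defs
  imports "HOL-Analysis.Analysis"
begin

definition lipschitz_domain :: "(real^'d::finite) set \<Rightarrow> bool" where
  "lipschitz_domain \<Omega> \<longleftrightarrow> open \<Omega> \<and> connected \<Omega> \<and> \<Omega> \<noteq> {} \<and>
     (\<forall>p\<in>frontier \<Omega>. \<exists>e r L (g :: real^'d \<Rightarrow> real).
        norm e = 1 \<and> r > 0 \<and> L-lipschitz_on UNIV g \<and>
        (\<forall>y. g y = g (y - (y \<bullet> e) *\<^sub>R e)) \<and>
        (\<forall>y\<in>ball p r. y \<in> \<Omega> \<longleftrightarrow> (y - p) \<bullet> e < g (y - p)))"

fun Ck :: "nat \<Rightarrow> 'a::euclidean_space set \<Rightarrow> ('a \<Rightarrow> 'b::euclidean_space) \<Rightarrow> bool" where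
  "Ck 0 S f = continuous_on S f"
| "Ck (Suc k) S f = (f differentiable_on S \<and>
      (\<forall>b\<in>Basis. Ck k S (\<lambda>x. frechet_derivative f (at x) b)))"

definition smooth_on :: "'a::euclidean_space set \<Rightarrow> ('a \<Rightarrow> 'b::euclidean_space) \<Rightarrow> bool" where
  "smooth_on S f \<longleftrightarrow> (\<forall>k. Ck k S f)"

definition pd :: "'k::finite \<Rightarrow> (real^'k \<Rightarrow> real) \<Rightarrow> real^'k \<Rightarrow> real" where
  "pd k g y = deriv (\<lambda>s. g (y + s *\<^sub>R axis k 1)) 0"

definition grad :: "(real^'k::finite \<Rightarrow> real) \<Rightarrow> real^'k \<Rightarrow> real^'k" where
  "grad g y = (\<chi> k. pd k g y)"

definition lap :: "(real^'k::finite \<Rightarrow> real) \<Rightarrow> real^'k \<Rightarrow> real" where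
  "lap g y = (\<Sum>k\<in>UNIV. pd k (pd k g) y)"

text \<open>Functions on \<Omega> x R^D, D = N d, with q = (q_1,..,q_N) indexed by ('n,'d).
  Weak derivatives are tested against C^1 functions with compact support in \<Omega> x R^D.\<close>

definition test_fn :: "('a::euclidean_space) set \<Rightarrow> ('a \<Rightarrow> real) \<Rightarrow> ('a \<Rightarrow> 'a \<Rightarrow> real) \<Rightarrow> bool" where
  "test_fn U \<psi> \<psi>' \<longleftrightarrow> (\<forall>z. (\<psi> has_derivative \<psi>' z) (at z)) \<and>
      (\<forall>v. continuous_on UNIV (\<lambda>z. \<psi>' z v)) \<and>
      (\<exists>K. compact K \<and> K \<subseteq> U \<and> (\<forall>z. z \<notin> K \<longrightarrow> \<psi> z = 0))"

definition weak_grad :: "('a::euclidean_space) set \<Rightarrow> ('a \<Rightarrow> real) \<Rightarrow> ('a \<Rightarrow> 'a \<Rightarrow> real) \<Rightarrow> bool" where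
  "weak_grad U \<phi> g \<longleftrightarrow>
     (\<forall>K. compact K \<and> K \<subseteq> U \<longrightarrow> set_integrable lborel K \<phi> \<and>
          (\<forall>b\<in>Basis. set_integrable lborel K (\<lambda>z. g z b))) \<and>
     (\<forall>\<psi> \<psi>'. test_fn U \<psi> \<psi>' \<longrightarrow>
        (\<forall>b\<in>Basis. (\<integral>z. \<phi> z * \<psi>' z b \<partial>lborel) = - (\<integral>z. g z b * \<psi> z \<partial>lborel)))"

definition Hspace :: "(real^'d::finite) set \<Rightarrow> (((real^'d) \<times> (real^('n::finite \<times> 'd))) \<Rightarrow> real) set" where
  "Hspace \<Omega> = {\<phi>. \<phi> \<in> borel_measurable lborel \<and>
     (\<exists>g. weak_grad (\<Omega> \<times> UNIV) \<phi> g \<and>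
        (\<integral>\<^sup>+ z. indicator (\<Omega> \<times> UNIV) z *
            ennreal (((\<phi> z)\<^sup>2 + (\<Sum>b\<in>Basis. (g z b)\<^sup>2)) * exp (- (norm (snd z))\<^sup>2 / 2)) \<partial>lborel) < \<infinity>)}"

definition block_diag :: "real^('n::finite \<times> 'd::finite)^('n \<times> 'd) \<Rightarrow> bool" where
  "block_diag A \<longleftrightarrow> (\<forall>i a j b. i \<noteq> j \<longrightarrow> A $ (i,a) $ (j,b) = 0)"

definition Zset :: "(real^('n::finite \<times> 'd::finite)^('n \<times> 'd)) set" where
  "Zset = {C. block_diag C \<and> transpose C = C \<and> (\<forall>v. v \<noteq> 0 \<longrightarrow> v \<bullet> (C *v v) > 0)}"

definition Ztilde :: "(real^('n::finite \<times> 'd::finite)^('n \<times> 'd)) set" where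
  "Ztilde = {A. block_diag A \<and> transpose A = A}"

definition diag_mat :: "real^'n::finite \<Rightarrow> real^'n^'n" where
  "diag_mat v = (\<chi> i j. if i = j then v $ i else 0)"

text \<open>Kronecker products  \<Lambda> \<otimes> I_d  and  I_N \<otimes> G  (q ordered bead-major).\<close>
definition kron_I :: "real^'n::finite^'n \<Rightarrow> real^('n \<times> 'd::finite)^('n \<times> 'd)" where
  "kron_I L = (\<chi> p r. L $ fst p $ fst r * (if snd p = snd r then 1 else 0))"

definition I_kron :: "real^'d::finite^'d \<Rightarrow> real^('n::finite \<times> 'd)^('n \<times> 'd)" where
  "I_kron G = (\<chi> p r. (if fst p = fst r then 1 else 0) * G $ snd p $ snd r)"

definition adjacent :: "'n::linorder \<Rightarrow> 'n \<Rightarrow> bool" where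
  "adjacent i j \<longleftrightarrow> i \<noteq> j \<and> \<not> (\<exists>k. min i j < k \<and> k < max i j)"

definition rouse :: "real^('n::{finite,linorder})^('n::{finite,linorder})" where
  "rouse = (\<chi> i j. if i = j then 2 else if adjacent i j then -1 else 0)"

definition Phi :: "real^('n::finite \<times> 'd::finite)^('n \<times> 'd) \<Rightarrow> real^('n \<times> 'd) \<Rightarrow> real" where
  "Phi C q = exp (- (q \<bullet> (matrix_inv C *v q)) / 2) /
             sqrt ((2 * pi) ^ CARD('n \<times> 'd) * det C)"

definition M_Phi :: "(real^'d::finite) set \<Rightarrow> (((real^'d) \<times> (real^('n::finite \<times> 'd))) \<Rightarrow> real) set" where
  "M_Phi \<Omega> = {f \<in> Hspace \<Omega>. \<exists>C. (\<forall>x\<in>\<Omega>. C x \<in> Zset) \<and>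
                       (\<forall>x\<in>\<Omega>. \<forall>q. f (x,q) = Phi (C x) q)}"

text \<open>Tangent space of M_Phi at f: elements of H arising as (pointwise) velocities
  at s = 0 of curves s \<mapsto> Phi(\<gamma> s) of Z-valued parameter fields through f.\<close>
definition tangent_space :: "(real^'d::finite) set \<Rightarrow> (((real^'d) \<times> (real^('n::finite \<times> 'd))) \<Rightarrow> real)
     \<Rightarrow> (((real^'d) \<times> (real^('n \<times> 'd))) \<Rightarrow> real) set" where
  "tangent_space \<Omega> f = {\<phi> \<in> Hspace \<Omega>. \<exists>\<gamma> :: real \<Rightarrow> real^'d \<Rightarrow> real^('n \<times> 'd)^('n \<times> 'd).
      (\<forall>s. \<forall>x\<in>\<Omega>. \<gamma> s x \<in> Zset) \<and>
      (\<forall>x\<in>\<Omega>. \<forall>q. Phi (\<gamma> 0 x) q = f (x,q)) \<and>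
      (\<forall>x\<in>\<Omega>. \<forall>q. ((\<lambda>s. Phi (\<gamma> s x) q) has_real_derivative \<phi> (x,q)) (at 0))}"

definition Mmat :: "real \<Rightarrow> real^'n::finite^'n \<Rightarrow> (real \<Rightarrow> real^'d::finite \<Rightarrow> real^'d) \<Rightarrow> real \<Rightarrow> real^'d
     \<Rightarrow> real^('n \<times> 'd)^('n \<times> 'd)" where
  "Mmat De \<Lambda> u t x = (1 / (2 * De)) *\<^sub>R kron_I \<Lambda> - I_kron (jacobian (u t) (at x))"

definition Lq :: "real \<Rightarrow> real^'n::finite^'n \<Rightarrow> (real \<Rightarrow> real^'d::finite \<Rightarrow> real^'d) \<Rightarrow> real
     \<Rightarrow> (((real^'d) \<times> (real^('n \<times> 'd))) \<Rightarrow> real) \<Rightarrow> ((real^'d) \<times> (real^('n \<times> 'd))) \<Rightarrow> real" where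
  "Lq De \<Lambda> u t \<phi> z = (let x = fst z in
     - (\<Sum>k\<in>UNIV. pd k (\<lambda>q'. (Mmat De \<Lambda> u t x *v q') $ k * \<phi> (x,q')
          + (1 / (2 * De)) * ((kron_I \<Lambda> :: real^('n \<times> 'd)^('n \<times> 'd)) *v grad (\<lambda>q''. \<phi> (x,q'')) q') $ k)
         (snd z)))"

definition Lx :: "(real \<Rightarrow> real^'d::finite \<Rightarrow> real^'d) \<Rightarrow> real \<Rightarrow> real
     \<Rightarrow> (((real^'d) \<times> 'q) \<Rightarrow> real) \<Rightarrow> ((real^'d) \<times> 'q) \<Rightarrow> real" where
  "Lx u \<epsilon> t \<phi> z = u t (fst z) \<bullet> grad (\<lambda>x'. \<phi> (x', snd z)) (fst z)
                   - \<epsilon> * lap (\<lambda>x'. \<phi> (x', snd z)) (fst z)"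

definition Lx_mat :: "(real \<Rightarrow> real^'d::finite \<Rightarrow> real^'d) \<Rightarrow> real \<Rightarrow> real
     \<Rightarrow> (real^'d \<Rightarrow> real^'m::finite^'m) \<Rightarrow> real^'d \<Rightarrow> real^'m^'m" where
  "Lx_mat u \<epsilon> t C x = (\<chi> i j. u t x \<bullet> grad (\<lambda>x'. C x' $ i $ j) x
                                - \<epsilon> * lap (\<lambda>x'. C x' $ i $ j) x)"

definition dmat :: "'d::finite \<Rightarrow> (real^'d \<Rightarrow> real^'m::finite^'m) \<Rightarrow> real^'d \<Rightarrow> real^'m^'m" where
  "dmat a C x = (\<chi> i j. pd a (\<lambda>x'. C x' $ i $ j) x)"

definition Aq :: "real \<Rightarrow> real^'n::finite^'n \<Rightarrow> (real \<Rightarrow> real^'d::finite \<Rightarrow> real^'d) \<Rightarrow> real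
     \<Rightarrow> (real^'d \<Rightarrow> real^('n \<times> 'd)^('n \<times> 'd)) \<Rightarrow> real^'d \<Rightarrow> real^('n \<times> 'd)^('n \<times> 'd)" where
  "Aq De \<Lambda> u t C x = (1/2) *\<^sub>R (matrix_inv (C x) **
      (Mmat De \<Lambda> u t x ** C x + C x ** transpose (Mmat De \<Lambda> u t x) - (1 / De) *\<^sub>R kron_I \<Lambda>)
      ** matrix_inv (C x))"

definition Ax :: "(real \<Rightarrow> real^'d::finite \<Rightarrow> real^'d) \<Rightarrow> real \<Rightarrow> real
     \<Rightarrow> (real^'d \<Rightarrow> real^'m::finite^'m) \<Rightarrow> real^'d \<Rightarrow> real^'m^'m" where
  "Ax u \<epsilon> t C x = (1/2) *\<^sub>R (matrix_inv (C x) ** Lx_mat u \<epsilon> t C x ** matrix_inv (C x))"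

definition rho :: "(real^'d::finite \<Rightarrow> real^'m::finite^'m) \<Rightarrow> real^'d \<Rightarrow> real^'m \<Rightarrow> real" where
  "rho C x q = (\<Sum>a\<in>UNIV. let B = matrix_inv (C x) ** dmat a C x in
       q \<bullet> ((B ** B ** matrix_inv (C x)) *v q) - (1/2) * trace (B ** B)
       - (1/4) * (q \<bullet> ((B ** matrix_inv (C x)) *v q) - trace B)\<^sup>2)"

end

theory Submission
  imports Defs
begin


type_synonym 'm mat = "real^'m^'m"

lemma inv_mat:
  fixes A :: "real^'m::finite^'m"
  assumes "invertible A"
  shows "A ** matrix_inv A = mat 1" "matrix_inv A ** A = mat 1"
proof -
  have "\<exists>A'. A ** A' = mat 1 \<and> A' ** A = mat 1" using assms unfolding invertible_def by blast
  then have "A ** matrix_inv A = mat 1 \<and> matrix_inv A ** A = mat 1"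
    unfolding matrix_inv_def by (rule someI_ex)
  then show "A ** matrix_inv A = mat 1" "matrix_inv A ** A = mat 1" by auto
qed

lemma inv_unique:
  fixes A B :: "real^'m::finite^'m"
  assumes "invertible A" "A ** B = mat 1"
  shows "B = matrix_inv A"
proof -
  have "B = (matrix_inv A ** A) ** B" using inv_mat[OF assms(1)] by (simp add: matrix_mul_lid)
  also have "\<dots> = matrix_inv A" by (simp add: matrix_mul_assoc[symmetric] assms(2) matrix_mul_rid)
  finally show ?thesis .
qed

lemma inv_unique_left:
  fixes A B :: "real^'m::finite^'m"
  assumes "invertible A" "B ** A = mat 1"
  shows "B = matrix_inv A"
proof -
  have "B = B ** (A ** matrix_inv A)" using inv_mat[OF assms(1)] by (simp add: matrix_mul_rid)
  also have "\<dots> = matrix_inv A" by (simp add: matrix_mul_assoc assms(2) matrix_mul_lid)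
  finally show ?thesis .
qed

lemma invertible_inv:
  fixes A :: "real^'m::finite^'m"
  assumes "invertible A"
  shows "invertible (matrix_inv A)" "matrix_inv (matrix_inv A) = A"
proof -
  show i: "invertible (matrix_inv A)" using inv_mat[OF assms] unfolding invertible_def by blast
  show "matrix_inv (matrix_inv A) = A" using inv_unique[OF i] inv_mat[OF assms] by metis
qed

lemma invertible_transpose':
  fixes A :: "real^'m::finite^'m"
  assumes "invertible A"
  shows "invertible (transpose A)" "matrix_inv (transpose A) = transpose (matrix_inv A)"
proof -
  have 1: "transpose A ** transpose (matrix_inv A) = mat 1"
    using inv_mat(2)[OF assms] by (metis matrix_transpose_mul transpose_mat)
  have 2: "transpose (matrix_inv A) ** transpose A = mat 1"
    using inv_mat(1)[OF assms] by (metis matrix_transpose_mul transpose_mat)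
  show i: "invertible (transpose A)" using 1 2 unfolding invertible_def by blast
  show "matrix_inv (transpose A) = transpose (matrix_inv A)" using inv_unique[OF i 1] by simp
qed

lemma inv_sym:
  fixes A :: "real^'m::finite^'m"
  assumes "invertible A" "transpose A = A"
  shows "transpose (matrix_inv A) = matrix_inv A"
  using invertible_transpose'(2)[OF assms(1)] assms(2) by simp

lemma det_inv:
  fixes A :: "real^'m::finite^'m"
  assumes "invertible A"
  shows "det (matrix_inv A) * det A = 1"
  using inv_mat(2)[OF assms] det_mul[of "matrix_inv A" A] by simp

lemma invertible_mult':
  fixes A B :: "real^'m::finite^'m"
  assumes "invertible A" "invertible B"
  shows "invertible (A ** B)"
  using assms by (simp add: invertible_det_nz det_mul)

lemma dot_mat: "(v::real^'m::finite) \<bullet> (A *v w) = (transpose A *v v) \<bullet> w"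
proof -
  have "(\<Sum>i\<in>UNIV. v$i * (\<Sum>j\<in>UNIV. A$i$j * w$j)) = (\<Sum>i\<in>UNIV. (\<Sum>j\<in>UNIV. A$j$i * v$j) * w$i)"
    apply (simp add: sum_distrib_left sum_distrib_right)
    apply (subst sum.swap) by (simp add: mult_ac)
  then show ?thesis by (simp add: inner_vec_def matrix_vector_mult_def transpose_def mult.commute)
qed
lemma axis_mat: "axis i 1 \<bullet> ((A::real^'m::finite^'m) *v axis j 1) = A $ i $ j"
  by (simp add: inner_vec_def matrix_vector_mult_def axis_def if_distrib[of "\<lambda>x. _ * x"] if_distrib[of "\<lambda>x. x * _"] cong: if_cong)

lemma if01_mult: "(if P then 1 else 0) * (a::real) = (if P then a else 0)" "a * (if P then 1 else 0) = (if P then a else 0)"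
  by auto

lemma mm_add_l: "((A::real^'m::finite^'m) + B) ** C = A ** C + B ** C"
  by (simp add: vec_eq_iff matrix_matrix_mult_def sum.distrib algebra_simps)
lemma mm_add_r: "(C::real^'m::finite^'m) ** (A + B) = C ** A + C ** B"
  by (simp add: vec_eq_iff matrix_matrix_mult_def sum.distrib algebra_simps)
lemma mm_diff_l: "((A::real^'m::finite^'m) - B) ** C = A ** C - B ** C"
  by (simp add: vec_eq_iff matrix_matrix_mult_def sum_subtractf algebra_simps)
lemma mm_diff_r: "(C::real^'m::finite^'m) ** (A - B) = C ** A - C ** B"
  by (simp add: vec_eq_iff matrix_matrix_mult_def sum_subtractf algebra_simps)
lemma mm_scale_l: "((c::real) *\<^sub>R (A::real^'m::finite^'m)) ** C = c *\<^sub>R (A ** C)"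
  by (simp add: vec_eq_iff matrix_matrix_mult_def sum_distrib_left algebra_simps)
lemma mm_scale_r: "(C::real^'m::finite^'m) ** ((c::real) *\<^sub>R A) = c *\<^sub>R (C ** A)"
  by (simp add: vec_eq_iff matrix_matrix_mult_def sum_distrib_left algebra_simps)
lemma mm_neg_l: "(- (A::real^'m::finite^'m)) ** C = - (A ** C)"
  by (simp add: vec_eq_iff matrix_matrix_mult_def sum_negf)
lemma mm_neg_r: "(C::real^'m::finite^'m) ** (- A) = - (C ** A)"
  by (simp add: vec_eq_iff matrix_matrix_mult_def sum_negf)
lemma mm_sum_l: "(\<Sum>a\<in>S. (X a::real^'m::finite^'m)) ** (C::real^'m::finite^'m) = (\<Sum>a\<in>S. X a ** C)"
  by (induct S rule: infinite_finite_induct) (auto simp: mm_add_l)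
lemma mm_sum_r: "(C::real^'m::finite^'m) ** (\<Sum>a\<in>S. (X a::real^'m::finite^'m)) = (\<Sum>a\<in>S. C ** X a)"
  by (induct S rule: infinite_finite_induct) (auto simp: mm_add_r)
lemma mm_zero: "(C::real^'m::finite^'m) ** 0 = 0" "0 ** C = 0"
  by (simp_all add: vec_eq_iff matrix_matrix_mult_def)

lemmas mm_lin = mm_add_l mm_add_r mm_diff_l mm_diff_r mm_scale_l mm_scale_r mm_neg_l mm_neg_r mm_sum_l mm_sum_r

lemma trace_scale: "trace ((c::real) *\<^sub>R (A::real^'m::finite^'m)) = c * trace A"
  by (simp add: trace_def sum_distrib_left)
lemma trace_neg: "trace (- (A::real^'m::finite^'m)) = - trace A"
  by (simp add: trace_def sum_negf)
lemma trace_sum: "trace (\<Sum>a\<in>S. (X a::real^'m::finite^'m)) = (\<Sum>a\<in>S. trace (X a))"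
  by (induct S rule: infinite_finite_induct) (auto simp: trace_add trace_0[unfolded mat_0])
lemmas trace_lin = trace_add trace_sub trace_scale trace_neg trace_sum

definition qf :: "real^'m::finite \<Rightarrow> real^'m^'m \<Rightarrow> real" where
  "qf q X = q \<bullet> (X *v q)"

lemma mv_add: "((A::real^'m::finite^'m) + B) *v x = A *v x + B *v x"
  by (simp add: vec_eq_iff matrix_vector_mult_def sum.distrib algebra_simps)
lemma mv_diff: "((A::real^'m::finite^'m) - B) *v x = A *v x - B *v x"
  by (simp add: vec_eq_iff matrix_vector_mult_def sum_subtractf algebra_simps)
lemma mv_scale: "((c::real) *\<^sub>R (A::real^'m::finite^'m)) *v x = c *\<^sub>R (A *v x)"
  by (simp add: vec_eq_iff matrix_vector_mult_def sum_distrib_left algebra_simps)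
lemma mv_neg: "(- (A::real^'m::finite^'m)) *v x = - (A *v x)"
  by (simp add: vec_eq_iff matrix_vector_mult_def sum_negf)
lemma mv_sum: "(\<Sum>a\<in>S. (X a::real^'m::finite^'m)) *v x = (\<Sum>a\<in>S. X a *v x)"
  by (induct S rule: infinite_finite_induct) (auto simp: mv_add)

lemma qf_add: "qf q (A + B) = qf q A + qf q B" by (simp add: qf_def mv_add inner_add_right)
lemma qf_diff: "qf q (A - B) = qf q A - qf q B" by (simp add: qf_def mv_diff inner_diff_right)
lemma qf_scale: "qf q (c *\<^sub>R A) = c * qf q A" by (simp add: qf_def mv_scale)
lemma qf_neg: "qf q (- A) = - qf q A" by (simp add: qf_def mv_neg)
lemma qf_sum: "qf q (\<Sum>a\<in>S. X a) = (\<Sum>a\<in>S. qf q (X a))"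
  by (simp add: qf_def mv_sum inner_sum_right)
lemmas qf_lin = qf_add qf_diff qf_scale qf_neg qf_sum

lemma qf_transpose: "qf q (transpose A) = qf q A"
  by (simp add: qf_def dot_mat inner_commute)

section \<open>Block diagonal\<close>

definition Eb :: "'n::finite \<Rightarrow> real^('n \<times> 'd::finite)^('n \<times> 'd)" where
  "Eb i = (\<chi> p r. if p = r \<and> fst p = i then 1 else 0)"

lemma Eb_l: "(Eb i ** A) $ p $ r = (if fst p = i then A $ p $ r else 0)"
proof -
  have "(Eb i ** A) $ p $ r = (\<Sum>k\<in>UNIV. if p = k then (if fst p = i then A $ k $ r else 0) else 0)"
    by (simp add: Eb_def matrix_matrix_mult_def if01_mult cong: if_cong)
  also have "\<dots> = (if fst p = i then A $ p $ r else 0)" by simp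
  finally show ?thesis .
qed
lemma Eb_r: "(A ** Eb i) $ p $ r = (if fst r = i then A $ p $ r else 0)"
proof -
  have "(A ** Eb i) $ p $ r = (\<Sum>k\<in>UNIV. if r = k then (if fst r = i then A $ p $ k else 0) else 0)"
    by (rule trans[OF _ sum.cong[OF refl]], simp add: Eb_def matrix_matrix_mult_def, auto)
  also have "\<dots> = (if fst r = i then A $ p $ r else 0)" by simp
  finally show ?thesis .
qed

lemma block_diag_comm: "block_diag A \<longleftrightarrow> (\<forall>i. Eb i ** A = A ** Eb i)"
proof
  assume "block_diag A"
  then show "\<forall>i. Eb i ** A = A ** Eb i"
    unfolding block_diag_def by (auto simp: vec_eq_iff Eb_l Eb_r)
next
  assume h: "\<forall>i. Eb i ** A = A ** Eb i"
  show "block_diag A" unfolding block_diag_def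
  proof (intro allI impI)
    fix i a j b assume ij: "(i::'a) \<noteq> j"
    have "(Eb i ** A) $ (i,a) $ (j,b) = (A ** Eb i) $ (i,a) $ (j,b)" using h by simp
    then show "A $ (i, a) $ (j, b) = 0" using ij by (simp add: Eb_l Eb_r)
  qed
qed

lemma block_diag_mult:
  assumes "block_diag A" "block_diag B" shows "block_diag (A ** B)"
  unfolding block_diag_comm
proof
  fix i
  have "Eb i ** (A ** B) = (Eb i ** A) ** B" by (simp add: matrix_mul_assoc)
  also have "\<dots> = A ** (Eb i ** B)" using assms(1)[unfolded block_diag_comm] by (simp add: matrix_mul_assoc)
  also have "\<dots> = (A ** B) ** Eb i" using assms(2)[unfolded block_diag_comm] by (simp add: matrix_mul_assoc)
  finally show "Eb i ** (A ** B) = (A ** B) ** Eb i" .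
qed

lemma block_diag_inv:
  assumes "invertible A" "block_diag A"
  shows "block_diag (matrix_inv A)"
  unfolding block_diag_comm
proof
  fix i
  let ?B = "matrix_inv A"
  have "Eb i ** ?B = ?B ** A ** Eb i ** ?B" by (simp add: inv_mat[OF assms(1)] matrix_mul_lid)
  also have "\<dots> = ?B ** (A ** Eb i) ** ?B" by (simp add: matrix_mul_assoc)
  also have "\<dots> = ?B ** (Eb i ** A) ** ?B" using assms(2)[unfolded block_diag_comm] by simp
  also have "\<dots> = ?B ** Eb i ** A ** ?B" by (simp add: matrix_mul_assoc)
  also have "\<dots> = ?B ** Eb i" by (simp add: matrix_mul_assoc[symmetric] inv_mat[OF assms(1)] matrix_mul_rid)
  finally show "Eb i ** ?B = ?B ** Eb i" .
qed

lemma block_diag_add: "block_diag A \<Longrightarrow> block_diag B \<Longrightarrow> block_diag (A + B)"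
  and block_diag_diff: "block_diag A \<Longrightarrow> block_diag B \<Longrightarrow> block_diag (A - B)"
  and block_diag_scale: "block_diag A \<Longrightarrow> block_diag (c *\<^sub>R A)"
  and block_diag_transpose: "block_diag A \<Longrightarrow> block_diag (transpose A)"
  and block_diag_one: "block_diag (mat 1)"
  and block_diag_zero: "block_diag 0"
  unfolding block_diag_def by (auto simp: transpose_def mat_def)

lemma block_diag_sum: "(\<And>a. a \<in> S \<Longrightarrow> block_diag (X a)) \<Longrightarrow> block_diag (\<Sum>a\<in>S. X a)"
  by (induct S rule: infinite_finite_induct) (auto intro: block_diag_add block_diag_zero)

section \<open>Positive definite\<close>

lemma pd_invertible:
  fixes A :: "real^'m::finite^'m"
  assumes "\<forall>v. v \<noteq> 0 \<longrightarrow> v \<bullet> (A *v v) > 0"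
  shows "invertible A"
proof -
  have "\<forall>x. A *v x = 0 \<longrightarrow> x = 0" using assms by (metis inner_zero_right less_irrefl)
  then obtain B where "B ** A = mat 1" using matrix_left_invertible_ker by blast
  then have "A ** B = mat 1" using matrix_left_right_inverse by blast
  with \<open>B ** A = mat 1\<close> show ?thesis unfolding invertible_def by blast
qed

lemma det_pd_pos:
  fixes C :: "real^'m::finite^'m"
  assumes pd: "\<forall>v. v \<noteq> 0 \<longrightarrow> v \<bullet> (C *v v) > 0"
  shows "det C > 0"
proof (rule ccontr)
  assume "\<not> det C > 0"
  define M where "M t = (1 - t) *\<^sub>R mat 1 + t *\<^sub>R C" for t :: real
  have Me: "M t $ i $ j = (1 - t) * (if i = j then 1 else 0) + t * C $ i $ j" for t i j
    by (simp add: M_def mat_def)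
  have cont: "isCont (\<lambda>t. det (M t)) t" for t
    unfolding det_def Me by (intro continuous_intros)
  have "\<exists>t\<ge>0. t \<le> 1 \<and> det (M t) = 0"
    by (rule IVT2) (use \<open>\<not> det C > 0\<close> cont in \<open>auto simp: M_def\<close>)
  then obtain t where t: "0 \<le> t" "t \<le> 1" "det (M t) = 0" by blast
  have "\<forall>v. v \<noteq> 0 \<longrightarrow> v \<bullet> (M t *v v) > 0"
  proof (intro allI impI)
    fix v :: "real^'m" assume v: "v \<noteq> 0"
    have "v \<bullet> (M t *v v) = (1 - t) * (v \<bullet> v) + t * (v \<bullet> (C *v v))"
      by (simp add: M_def mv_add mv_scale inner_add_right)
    moreover have "v \<bullet> v > 0" using v by simp
    moreover have "v \<bullet> (C *v v) > 0" using v pd by blast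
    ultimately show "v \<bullet> (M t *v v) > 0" using t
      by (cases "t = 0") (auto intro: add_nonneg_pos add_pos_nonneg mult_pos_pos)
  qed
  then have "invertible (M t)" by (rule pd_invertible)
  then show False using t(3) by (simp add: invertible_det_nz)
qed

lemma Zset_props:
  assumes "C \<in> Zset"
  shows "invertible C" "det C > 0" "transpose C = C" "block_diag C"
    "transpose (matrix_inv C) = matrix_inv C" "block_diag (matrix_inv C)"
    "invertible (matrix_inv C)" "matrix_inv (matrix_inv C) = C"
    "C ** matrix_inv C = mat 1" "matrix_inv C ** C = mat 1"
proof -
  have pd: "\<forall>v. v \<noteq> 0 \<longrightarrow> v \<bullet> (C *v v) > 0" and s: "transpose C = C" and b: "block_diag C"
    using assms by (auto simp: Zset_def)
  show i: "invertible C" by (rule pd_invertible[OF pd])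
  show "det C > 0" by (rule det_pd_pos[OF pd])
  show "transpose C = C" "block_diag C" by fact+
  show "transpose (matrix_inv C) = matrix_inv C" by (rule inv_sym[OF i s])
  show "block_diag (matrix_inv C)" by (rule block_diag_inv[OF i b])
  show "invertible (matrix_inv C)" "matrix_inv (matrix_inv C) = C" using invertible_inv[OF i] by auto
  show "C ** matrix_inv C = mat 1" "matrix_inv C ** C = mat 1" using inv_mat[OF i] by auto
qed



lemma DM: "(f has_real_derivative D) (at x) \<Longrightarrow> (g has_real_derivative E) (at x) \<Longrightarrow>
  ((\<lambda>x. f x * g x) has_real_derivative D * g x + f x * E) (at x)"
  using DERIV_mult'[of f D x UNIV g E] by (simp add: add.commute)

definition mder :: "(real \<Rightarrow> real^'m::finite^'m) \<Rightarrow> real^'m^'m \<Rightarrow> real \<Rightarrow> bool" where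
  "mder c c' s \<longleftrightarrow> (\<forall>i j. ((\<lambda>r. c r $ i $ j) has_real_derivative c' $ i $ j) (at s))"

lemma mder_const: "mder (\<lambda>r. A) 0 s"
  by (simp add: mder_def)

lemma mder_add: "mder a a' s \<Longrightarrow> mder b b' s \<Longrightarrow> mder (\<lambda>r. a r + b r) (a' + b') s"
  by (auto simp: mder_def intro!: derivative_eq_intros)

lemma mder_diff: "mder a a' s \<Longrightarrow> mder b b' s \<Longrightarrow> mder (\<lambda>r. a r - b r) (a' - b') s"
  by (auto simp: mder_def intro!: derivative_eq_intros)

lemma mder_scale: "mder a a' s \<Longrightarrow> mder (\<lambda>r. k *\<^sub>R a r) (k *\<^sub>R a') s"
  by (auto simp: mder_def intro!: derivative_eq_intros)

lemma mder_fscale: "(f has_real_derivative f') (at s) \<Longrightarrow> mder (\<lambda>r. f r *\<^sub>R A) (f' *\<^sub>R A) s"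
  by (auto simp: mder_def intro!: derivative_eq_intros)

lemma mder_transpose: "mder a a' s \<Longrightarrow> mder (\<lambda>r. transpose (a r)) (transpose a') s"
  by (auto simp: mder_def transpose_def)

lemma mder_mult:
  assumes "mder a a' s" "mder b b' s"
  shows "mder (\<lambda>r. a r ** b r) (a' ** b s + a s ** b') s"
  unfolding mder_def
proof (intro allI)
  fix i j
  have "((\<lambda>r. \<Sum>k\<in>UNIV. a r $ i $ k * b r $ k $ j) has_real_derivative
     (\<Sum>k\<in>UNIV. a' $ i $ k * b s $ k $ j + a s $ i $ k * b' $ k $ j)) (at s)"
    using assms unfolding mder_def by (intro DERIV_sum DM) auto
  then show "((\<lambda>r. (a r ** b r) $ i $ j) has_real_derivative (a' ** b s + a s ** b') $ i $ j) (at s)"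
    by (simp add: matrix_matrix_mult_def sum.distrib)
qed

lemma mder_cong_ev:
  assumes "eventually (\<lambda>r. c r = d r) (nhds s)" "mder c c' s"
  shows "mder d c' s"
  unfolding mder_def
proof (intro allI)
  fix i j
  have ev: "eventually (\<lambda>r. c r $ i $ j = d r $ i $ j) (nhds s)"
    using assms(1) by (rule eventually_mono) simp
  show "((\<lambda>r. d r $ i $ j) has_real_derivative c' $ i $ j) (at s)"
    using assms(2) DERIV_cong_ev[OF refl ev refl] unfolding mder_def by blast
qed

lemma mder_unique: "mder c a s \<Longrightarrow> mder c b s \<Longrightarrow> a = b"
  unfolding mder_def vec_eq_iff using DERIV_unique by blast

lemma qf_DERIV:
  assumes "mder N N' s"
  shows "((\<lambda>r. qf q (N r)) has_real_derivative qf q N') (at s)"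
proof -
  have "((\<lambda>r. \<Sum>i\<in>UNIV. q$i * (\<Sum>j\<in>UNIV. N r$i$j * q$j)) has_real_derivative
          (\<Sum>i\<in>UNIV. q$i * (\<Sum>j\<in>UNIV. N'$i$j * q$j))) (at s)"
    using assms unfolding mder_def by (intro DERIV_sum DERIV_cmult DERIV_cmult_right) auto
  then show ?thesis by (simp add: qf_def inner_vec_def matrix_vector_mult_def mult.commute)
qed

lemma trace_DERIV:
  assumes "mder N N' s"
  shows "((\<lambda>r. trace (N r)) has_real_derivative trace N') (at s)"
  using assms unfolding mder_def trace_def
  by (intro DERIV_sum) auto

definition detd :: "real^'m::finite^'m \<Rightarrow> real^'m^'m \<Rightarrow> real" where
  "detd A X = (\<Sum>p\<in>{p. p permutes (UNIV::'m set)}. of_int (sign p) *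
      (\<Sum>k\<in>UNIV. X $ k $ p k * (\<Prod>i\<in>UNIV - {k}. A $ i $ p i)))"

lemma det_DERIV_gen:
  assumes "mder c c' s"
  shows "((\<lambda>r. det (c r)) has_real_derivative detd (c s) c') (at s)"
  using assms unfolding mder_def det_def detd_def
  by (intro DERIV_sum DERIV_cmult has_field_derivative_prod) auto

lemma detd_rows:
  "detd A X = (\<Sum>k\<in>UNIV. det (\<chi> i. if i = k then X $ k else A $ i))"
proof -
  have "det (\<chi> i. if i = k then X $ k else A $ i) =
     (\<Sum>p\<in>{p. p permutes (UNIV::'a set)}. of_int (sign p) * (X $ k $ p k * (\<Prod>i\<in>UNIV - {k}. A $ i $ p i)))"
    for k
  proof -
    have "(\<Prod>i\<in>UNIV. (\<chi> i. if i = k then X $ k else A $ i) $ i $ p i) =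
        X $ k $ p k * (\<Prod>i\<in>UNIV - {k}. A $ i $ p i)" for p
    proof -
      have "(\<Prod>i\<in>UNIV. (\<chi> i. if i = k then X $ k else A $ i) $ i $ p i) =
          (\<chi> i. if i = k then X $ k else A $ i) $ k $ p k *
          (\<Prod>i\<in>UNIV - {k}. (\<chi> i. if i = k then X $ k else A $ i) $ i $ p i)"
        by (rule prod.remove) auto
      also have "(\<Prod>i\<in>UNIV - {k}. (\<chi> i. if i = k then X $ k else A $ i) $ i $ p i) =
          (\<Prod>i\<in>UNIV - {k}. A $ i $ p i)"
        by (rule prod.cong) auto
      finally show ?thesis by simp
    qed
    then show ?thesis unfolding det_def by simp
  qed
  then show ?thesis unfolding detd_def
    by (simp add: sum_distrib_left) (rule sum.swap)
qed

lemma row_mult_expand: "((Y::real^'m::finite^'m) ** A) $ k = (\<Sum>m\<in>UNIV. Y $ k $ m *s row m A)"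
  by (simp add: vec_eq_iff matrix_matrix_mult_def row_def)


lemma jacobi:
  fixes A X :: "real^'m::finite^'m"
  assumes "invertible A"
  shows "detd A X = det A * trace (matrix_inv A ** X)"
proof -
  define Y where "Y = X ** matrix_inv A"
  have XY: "Y ** A = X" unfolding Y_def
    by (simp only: matrix_mul_assoc[symmetric] inv_mat[OF assms] matrix_mul_rid)
  have rowA: "row i A = A $ i" for i by (simp add: row_def vec_lambda_eta)
  have "det (\<chi> i. if i = k then X $ k else A $ i) = Y $ k $ k * det A" for k
  proof -
    have "X $ k = (\<Sum>m\<in>UNIV. (row k Y) $ m *s row m A)"
      using row_mult_expand[of Y A k] unfolding XY by (simp add: row_def)
    then have "(\<chi> i. if i = k then X $ k else A $ i) =
        (\<chi> i. if i = k then (\<Sum>m\<in>UNIV. (row k Y) $ m *s row m A) else row i A)"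
      by (simp only: rowA)
    then show ?thesis using cramer_lemma_transpose[of k "row k Y" A] by (simp add: row_def)
  qed
  then have "detd A X = det A * trace Y"
    unfolding detd_rows trace_def by (simp add: sum_distrib_left mult.commute)
  then show ?thesis using trace_mul_sym[of X "matrix_inv A"] by (simp add: Y_def)
qed
lemma det_DERIV:
  assumes "mder c c' s" "invertible (c s)"
  shows "((\<lambda>r. det (c r)) has_real_derivative det (c s) * trace (matrix_inv (c s) ** c')) (at s)"
  using det_DERIV_gen[OF assms(1)] jacobi[OF assms(2)] by simp

lemma inv_entry:
  fixes A :: "real^'m::finite^'m"
  assumes "invertible A"
  shows "matrix_inv A $ k $ j = det (\<chi> i l. if l = k then (if i = j then 1 else 0) else A $ i $ l) / det A"
proof -
  have d: "det A \<noteq> 0" using assms invertible_det_nz by blast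
  have "A *v (matrix_inv A *v axis j 1) = axis j 1"
    by (simp add: matrix_vector_mul_assoc inv_mat[OF assms])
  then have "matrix_inv A *v axis j 1 = (\<chi> k. det (\<chi> i l. if l = k then axis j 1 $ i else A $ i $ l) / det A)"
    using cramer[OF d] by blast
  moreover have "(matrix_inv A *v axis j 1) $ k = matrix_inv A $ k $ j"
    by (simp add: matrix_vector_mult_def axis_def if01_mult cong: if_cong)
  moreover have "(\<chi> i l. if l = k then axis j 1 $ i else A $ i $ l) =
      (\<chi> i l. if l = k then (if i = j then 1 else 0) else A $ i $ l)"
    by (simp add: vec_eq_iff axis_def)
  ultimately show ?thesis by simp
qed

lemma eventually_invertible:
  assumes "mder c c' s" "invertible (c s)"
  shows "eventually (\<lambda>r. invertible (c r)) (nhds s)"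
proof -
  have "isCont (\<lambda>r. det (c r)) s" using det_DERIV_gen[OF assms(1)] by (rule DERIV_isCont)
  then have "((\<lambda>r. det (c r)) \<longlongrightarrow> det (c s)) (at s)"
    by (simp add: isCont_def)
  moreover have d: "det (c s) \<noteq> 0" using assms(2) invertible_det_nz by blast
  ultimately have "eventually (\<lambda>r. det (c r) \<noteq> 0) (at s)"
    using tendsto_imp_eventually_ne by blast
  then have "eventually (\<lambda>r. det (c r) \<noteq> 0) (nhds s)"
    using d eventually_nhds_conv_at by blast
  then show ?thesis by (rule eventually_mono) (simp add: invertible_det_nz)
qed


lemma inv_DERIV:
  assumes "mder c c' s" "invertible (c s)"
  shows "mder (\<lambda>r. matrix_inv (c r)) (- (matrix_inv (c s) ** c' ** matrix_inv (c s))) s"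
proof -
  have ev: "eventually (\<lambda>r. invertible (c r)) (nhds s)" by (rule eventually_invertible[OF assms])
  have d: "det (c s) \<noteq> 0" using assms(2) invertible_det_nz by blast
  have ex: "\<exists>D. ((\<lambda>r. matrix_inv (c r) $ k $ j) has_real_derivative D) (at s)" for k j
  proof -
    define cr where "cr r = (\<chi> i l. if l = k then (if i = j then 1 else 0) else c r $ i $ l)" for r
    have "mder cr (\<chi> i l. if l = k then 0 else c' $ i $ l) s"
      unfolding mder_def
    proof (intro allI)
      fix i l
      show "((\<lambda>r. cr r $ i $ l) has_real_derivative (\<chi> i l. if l = k then 0 else c' $ i $ l) $ i $ l) (at s)"
        using assms(1) unfolding mder_def cr_def by (cases "l = k") auto
    qed
    from DERIV_divide[OF det_DERIV_gen[OF this] det_DERIV_gen[OF assms(1)] d]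
    obtain D where D: "((\<lambda>r. det (cr r) / det (c r)) has_real_derivative D) (at s)" by blast
    have evq: "eventually (\<lambda>r. det (cr r) / det (c r) = matrix_inv (c r) $ k $ j) (nhds s)"
      using ev
    proof (rule eventually_mono)
      fix r assume h: "invertible (c r)"
      show "det (cr r) / det (c r) = matrix_inv (c r) $ k $ j"
        unfolding inv_entry[OF h, of k j] cr_def by (rule refl)
    qed
    show ?thesis using D DERIV_cong_ev[OF refl evq refl] by blast
  qed
  define Dm where "Dm = (\<chi> k j. deriv (\<lambda>r. matrix_inv (c r) $ k $ j) s)"
  have mD: "mder (\<lambda>r. matrix_inv (c r)) Dm s"
    unfolding mder_def
  proof (intro allI)
    fix i j
    obtain D where D: "((\<lambda>r. matrix_inv (c r) $ i $ j) has_real_derivative D) (at s)" using ex by blast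
    then have "deriv (\<lambda>r. matrix_inv (c r) $ i $ j) s = D" by (rule DERIV_imp_deriv)
    then show "((\<lambda>r. matrix_inv (c r) $ i $ j) has_real_derivative Dm $ i $ j) (at s)"
      using D by (simp add: Dm_def)
  qed
  have "mder (\<lambda>r. c r ** matrix_inv (c r)) (c' ** matrix_inv (c s) + c s ** Dm) s"
    by (rule mder_mult[OF assms(1) mD])
  moreover have "mder (\<lambda>r. c r ** matrix_inv (c r)) 0 s"
  proof (rule mder_cong_ev[OF _ mder_const[of "mat 1"]])
    show "eventually (\<lambda>r. mat 1 = c r ** matrix_inv (c r)) (nhds s)"
      using ev by (rule eventually_mono) (simp only: inv_mat(1))
  qed
  ultimately have e: "c' ** matrix_inv (c s) + c s ** Dm = 0" by (rule mder_unique)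
  let ?B = "matrix_inv (c s)"
  have "Dm = ?B ** (c s ** Dm)"
    by (simp only: matrix_mul_assoc inv_mat[OF assms(2)] matrix_mul_lid)
  also have "c s ** Dm = - (c' ** ?B)" by (metis e add.commute eq_neg_iff_add_eq_0)
  also have "?B ** (- (c' ** ?B)) = - (?B ** c' ** ?B)" by (simp only: mm_neg_r matrix_mul_assoc)
  finally show ?thesis using mD by simp
qed


lemma KK_pos: "(2 * pi) ^ CARD('n::finite \<times> 'd::finite) > (0::real)"
  by simp

lemma Phi_alt:
  fixes C :: "real^('n::finite \<times> 'd::finite)^('n \<times> 'd)"
  shows "Phi C q = exp (- qf q (matrix_inv C) / 2) / sqrt ((2 * pi) ^ CARD('n \<times> 'd) * det C)"
  by (simp add: Phi_def qf_def)

lemma Phi_pos: "det C > 0 \<Longrightarrow> Phi C q > 0"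
  by (simp add: Phi_def)

lemma Phi_DERIV:
  fixes c :: "real \<Rightarrow> real^('n::finite \<times> 'd::finite)^('n \<times> 'd)"
  assumes "mder c c' s" "invertible (c s)" "det (c s) > 0"
  shows "((\<lambda>r. Phi (c r) q) has_real_derivative
           Phi (c s) q * (qf q (matrix_inv (c s) ** c' ** matrix_inv (c s)) / 2
                          - trace (matrix_inv (c s) ** c') / 2)) (at s)"
proof -
  let ?K = "(2 * pi) ^ CARD('n \<times> 'd) :: real"
  let ?Ci = "matrix_inv (c s)"
  let ?M = "?Ci ** c' ** ?Ci"
  have qd: "((\<lambda>r. qf q (matrix_inv (c r))) has_real_derivative qf q (- ?M)) (at s)"
    by (rule qf_DERIV[OF inv_DERIV[OF assms(1,2)]])
  have dd: "((\<lambda>r. det (c r)) has_real_derivative det (c s) * trace (?Ci ** c')) (at s)"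
    by (rule det_DERIV[OF assms(1,2)])
  have e: "((\<lambda>r. exp (- qf q (matrix_inv (c r)) / 2)) has_real_derivative
      exp (- qf q ?Ci / 2) * (- qf q (- ?M) / 2)) (at s)"
    by (intro DERIV_fun_exp DERIV_cdivide DERIV_minus qd)
  have pos: "?K * det (c s) > 0" using assms(3) by simp
  have sq: "((\<lambda>r. sqrt (?K * det (c r))) has_real_derivative
      inverse (sqrt (?K * det (c s))) / 2 * (?K * (det (c s) * trace (?Ci ** c')))) (at s)"
    by (rule DERIV_chain2[OF DERIV_real_sqrt[OF pos] DERIV_cmult[OF dd]])
  have nz: "sqrt (?K * det (c s)) \<noteq> 0" using pos by (metis real_sqrt_gt_zero less_irrefl)
  have S2: "sqrt (?K * det (c s)) * sqrt (?K * det (c s)) = ?K * det (c s)"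
    using pos by simp
  show ?thesis
    unfolding Phi_alt
  proof (rule DERIV_cong[OF DERIV_divide[OF e sq nz]])
    let ?E = "exp (- qf q ?Ci / 2)" and ?S = "sqrt (?K * det (c s))"
    have "(?E * (- qf q (- ?M) / 2) * ?S - ?E * (inverse ?S / 2 * (?K * (det (c s) * trace (?Ci ** c'))))) / (?S * ?S)
        = ?E / ?S * (qf q ?M / 2) - ?E / ?S * (inverse ?S / ?S * (?K * det (c s)) * trace (?Ci ** c') / 2)"
      using nz by (simp add: qf_neg field_simps)
    also have "inverse ?S / ?S * (?K * det (c s)) = 1"
      using S2 nz by (simp add: field_simps)
    finally show "(?E * (- qf q (- ?M) / 2) * ?S - ?E * (inverse ?S / 2 * (?K * (det (c s) * trace (?Ci ** c'))))) / (?S * ?S)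
        = ?E / ?S * (qf q ?M / 2 - trace (?Ci ** c') / 2)"
      by (simp add: right_diff_distrib)
  qed
qed



lemma qf_axis_add:
  fixes P :: "real^'m::finite^'m"
  shows "qf (axis i 1 + axis j 1) P = P $ i $ i + P $ i $ j + P $ j $ i + P $ j $ j"
  by (simp add: qf_def matrix_vector_right_distrib inner_add_left inner_add_right axis_mat)

lemma qf_axis: "qf (axis i 1) (P::real^'m::finite^'m) = P $ i $ i"
  by (simp add: qf_def axis_mat)

lemma polar:
  fixes P :: "real^'m::finite^'m"
  assumes "transpose P = P"
  shows "P $ i $ j = (qf (axis i 1 + axis j 1) P - qf (axis i 1) P - qf (axis j 1) P) / 2"
proof -
  have "P $ j $ i = P $ i $ j" using assms by (metis transpose_def vec_lambda_beta)
  then show ?thesis unfolding qf_axis_add qf_axis by simp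
qed

lemma qf_eq_imp_eq:
  fixes P Q :: "real^'m::finite^'m"
  assumes "transpose P = P" "transpose Q = Q" "\<forall>q. qf q P = qf q Q"
  shows "P = Q"
proof -
  have "P $ i $ j = Q $ i $ j" for i j
    using polar[OF assms(1), of i j] polar[OF assms(2), of i j] assms(3) by simp
  then show ?thesis by (simp add: vec_eq_iff)
qed

lemma Phi_zero:
  fixes C :: "real^('n::finite \<times> 'd::finite)^('n \<times> 'd)"
  shows "Phi C 0 = 1 / sqrt ((2 * pi) ^ CARD('n \<times> 'd) * det C)"
  by (simp add: Phi_alt qf_def)

lemma Phi_ratio:
  fixes C :: "real^('n::finite \<times> 'd::finite)^('n \<times> 'd)"
  assumes "det C > 0"
  shows "Phi C q / Phi C 0 = exp (- qf q (matrix_inv C) / 2)"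
proof -
  have d: "det C \<noteq> 0" using assms by simp
  have "(2 * pi) ^ CARD('n \<times> 'd) * det C > 0" using assms by simp
  then have "sqrt ((2 * pi) ^ CARD('n \<times> 'd) * det C) > 0" by simp
  then show ?thesis unfolding Phi_zero using d by (simp add: Phi_alt)
qed

lemma Phi_inj:
  fixes C1 C2 :: "real^('n::finite \<times> 'd::finite)^('n \<times> 'd)"
  assumes "C1 \<in> Zset" "C2 \<in> Zset" "\<forall>q. Phi C1 q = Phi C2 q"
  shows "C1 = C2"
proof -
  have "qf q (matrix_inv C1) = qf q (matrix_inv C2)" for q
  proof -
    have "exp (- qf q (matrix_inv C1) / 2) = exp (- qf q (matrix_inv C2) / 2)"
      using Phi_ratio[OF Zset_props(2)[OF assms(1)], of q] Phi_ratio[OF Zset_props(2)[OF assms(2)], of q] assms(3)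
      by simp
    then show ?thesis by simp
  qed
  then have "matrix_inv C1 = matrix_inv C2"
    using qf_eq_imp_eq Zset_props(5)[OF assms(1)] Zset_props(5)[OF assms(2)] by blast
  then show ?thesis using Zset_props(8)[OF assms(1)] Zset_props(8)[OF assms(2)] by metis
qed

lemma Phi_curve_mder:
  fixes \<gamma> :: "real \<Rightarrow> real^('n::finite \<times> 'd::finite)^('n \<times> 'd)"
  assumes Z: "\<forall>s. \<gamma> s \<in> Zset" and D: "\<forall>q. \<exists>D. ((\<lambda>s. Phi (\<gamma> s) q) has_real_derivative D) (at 0)"
  shows "mder (\<lambda>s. matrix_inv (\<gamma> s)) (\<chi> i j. deriv (\<lambda>s. matrix_inv (\<gamma> s) $ i $ j) 0) 0"
proof -
  have qd: "\<exists>D. ((\<lambda>s. qf q (matrix_inv (\<gamma> s))) has_real_derivative D) (at 0)" for q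
  proof -
    obtain Dq where Dq: "((\<lambda>s. Phi (\<gamma> s) q) has_real_derivative Dq) (at 0)" using D by blast
    obtain D0 where D0: "((\<lambda>s. Phi (\<gamma> s) 0) has_real_derivative D0) (at 0)" using D by blast
    have p0: "Phi (\<gamma> 0) 0 > 0" "Phi (\<gamma> 0) q > 0"
      using Phi_pos Zset_props(2) Z by blast+
    from DERIV_divide[OF Dq D0] p0 obtain E where
      E: "((\<lambda>s. Phi (\<gamma> s) q / Phi (\<gamma> s) 0) has_real_derivative E) (at 0)" by force
    have pr: "Phi (\<gamma> 0) q / Phi (\<gamma> 0) 0 > 0" using p0 by simp
    from DERIV_chain2[OF DERIV_ln[OF pr] E] DERIV_cmult[where c = "-2"]
    obtain F where F: "((\<lambda>s. -2 * ln (Phi (\<gamma> s) q / Phi (\<gamma> s) 0)) has_real_derivative F) (at 0)"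
      by blast
    have "(\<lambda>s. -2 * ln (Phi (\<gamma> s) q / Phi (\<gamma> s) 0)) = (\<lambda>s. qf q (matrix_inv (\<gamma> s)))"
    proof
      fix s
      show "-2 * ln (Phi (\<gamma> s) q / Phi (\<gamma> s) 0) = qf q (matrix_inv (\<gamma> s))"
        using Phi_ratio[OF Zset_props(2)[OF Z[rule_format, of s]], of q] by simp
    qed
    then show ?thesis using F by metis
  qed
  have ed: "\<exists>D. ((\<lambda>s. matrix_inv (\<gamma> s) $ i $ j) has_real_derivative D) (at 0)" for i j
  proof -
    let ?a = "axis i 1 :: real^('n \<times> 'd)" and ?b = "axis j 1 :: real^('n \<times> 'd)"
    obtain D1 where D1: "((\<lambda>s. qf (?a + ?b) (matrix_inv (\<gamma> s))) has_real_derivative D1) (at 0)" using qd by blast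
    obtain D2 where D2: "((\<lambda>s. qf ?a (matrix_inv (\<gamma> s))) has_real_derivative D2) (at 0)" using qd by blast
    obtain D3 where D3: "((\<lambda>s. qf ?b (matrix_inv (\<gamma> s))) has_real_derivative D3) (at 0)" using qd by blast
    have "((\<lambda>s. (qf (?a + ?b) (matrix_inv (\<gamma> s)) - qf ?a (matrix_inv (\<gamma> s)) - qf ?b (matrix_inv (\<gamma> s))) / 2)
        has_real_derivative (D1 - D2 - D3) / 2) (at 0)"
      by (intro DERIV_cdivide DERIV_diff D1 D2 D3)
    moreover have "(\<lambda>s. (qf (?a + ?b) (matrix_inv (\<gamma> s)) - qf ?a (matrix_inv (\<gamma> s)) - qf ?b (matrix_inv (\<gamma> s))) / 2)
        = (\<lambda>s. matrix_inv (\<gamma> s) $ i $ j)"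
    proof
      fix s
      show "(qf (?a + ?b) (matrix_inv (\<gamma> s)) - qf ?a (matrix_inv (\<gamma> s)) - qf ?b (matrix_inv (\<gamma> s))) / 2
          = matrix_inv (\<gamma> s) $ i $ j"
        using polar[OF Zset_props(5)[OF Z[rule_format, of s]], of i j] by simp
    qed
    ultimately show ?thesis by metis
  qed
  show ?thesis unfolding mder_def
  proof (intro allI)
    fix i j
    obtain D where D: "((\<lambda>s. matrix_inv (\<gamma> s) $ i $ j) has_real_derivative D) (at 0)" using ed by blast
    then have "deriv (\<lambda>s. matrix_inv (\<gamma> s) $ i $ j) 0 = D" by (rule DERIV_imp_deriv)
    then show "((\<lambda>s. matrix_inv (\<gamma> s) $ i $ j) has_real_derivative
        (\<chi> i j. deriv (\<lambda>s. matrix_inv (\<gamma> s) $ i $ j) 0) $ i $ j) (at 0)"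
      using D by simp
  qed
qed


lemma sandwich_cancel:
  fixes Ci C X :: "real^'m::finite^'m"
  assumes "Ci ** C = mat 1" "C ** Ci = mat 1"
  shows "Ci ** (C ** X ** C) ** Ci = X" "Ci ** (C ** X ** C) = X ** C" "Ci ** (C ** X) = X"
    "(X ** C) ** Ci = X"
proof -
  have "Ci ** (C ** X ** C) ** Ci = (Ci ** C) ** X ** (C ** Ci)" by (simp only: matrix_mul_assoc)
  then show "Ci ** (C ** X ** C) ** Ci = X" using assms by (simp add: matrix_mul_lid matrix_mul_rid)
  have "Ci ** (C ** X ** C) = (Ci ** C) ** X ** C" by (simp only: matrix_mul_assoc)
  then show "Ci ** (C ** X ** C) = X ** C" using assms by (simp add: matrix_mul_lid matrix_mul_rid)
  have "Ci ** (C ** X) = (Ci ** C) ** X" by (simp only: matrix_mul_assoc)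
  then show "Ci ** (C ** X) = X" using assms by (simp add: matrix_mul_lid matrix_mul_rid)
  have "(X ** C) ** Ci = X ** (C ** Ci)" by (simp only: matrix_mul_assoc)
  then show "(X ** C) ** Ci = X" using assms by (simp add: matrix_mul_lid matrix_mul_rid)
qed

lemma transpose_nth: "transpose A $ i $ j = A $ j $ i" by (simp add: transpose_def)

lemma tangent_sub:
  fixes C :: "real^'d::finite \<Rightarrow> real^('n::finite \<times> 'd)^('n \<times> 'd)"
    and f :: "((real^'d) \<times> (real^('n \<times> 'd))) \<Rightarrow> real"
  assumes CZ: "\<forall>x\<in>\<Omega>. C x \<in> Zset" and fC: "\<forall>x\<in>\<Omega>. \<forall>q. f (x,q) = Phi (C x) q"
    and phi: "\<phi> \<in> tangent_space \<Omega> f"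
  shows "\<exists>A. (\<forall>x\<in>\<Omega>. A x \<in> Ztilde) \<and>
          (\<forall>x\<in>\<Omega>. \<forall>q. \<phi> (x,q) = (q \<bullet> (A x *v q) - trace (A x ** C x)) * f (x,q))"
proof -
  obtain \<gamma> :: "real \<Rightarrow> real^'d \<Rightarrow> real^('n \<times> 'd)^('n \<times> 'd)" where
    gZ: "\<forall>s. \<forall>x\<in>\<Omega>. \<gamma> s x \<in> Zset" and g0: "\<forall>x\<in>\<Omega>. \<forall>q. Phi (\<gamma> 0 x) q = f (x,q)"
    and gD: "\<forall>x\<in>\<Omega>. \<forall>q. ((\<lambda>s. Phi (\<gamma> s x) q) has_real_derivative \<phi> (x,q)) (at 0)"
    using phi unfolding tangent_space_def by blast
  define P' where "P' x = (\<chi> i j. deriv (\<lambda>s. matrix_inv (\<gamma> s x) $ i $ j) 0)" for x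
  define A where "A x = (- (1/2)) *\<^sub>R P' x" for x
  have AZ: "A x \<in> Ztilde" if x: "x \<in> \<Omega>" for x
  proof -
    have bd: "block_diag (P' x)" unfolding block_diag_def
    proof (intro allI impI)
      fix i a j b assume ij: "(i::'n) \<noteq> j"
      have "(\<lambda>s. matrix_inv (\<gamma> s x) $ (i,a) $ (j,b)) = (\<lambda>s. 0)"
      proof
        fix s
        show "matrix_inv (\<gamma> s x) $ (i,a) $ (j,b) = 0"
          using Zset_props(6)[of "\<gamma> s x"] gZ x ij unfolding block_diag_def by blast
      qed
      then show "P' x $ (i,a) $ (j,b) = 0" by (simp add: P'_def)
    qed
    have sy: "transpose (P' x) = P' x"
    proof -
      have "(\<lambda>s. matrix_inv (\<gamma> s x) $ j $ i) = (\<lambda>s. matrix_inv (\<gamma> s x) $ i $ j)" for i j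
      proof
        fix s
        have "transpose (matrix_inv (\<gamma> s x)) = matrix_inv (\<gamma> s x)"
          using Zset_props(5) gZ x by blast
        then show "matrix_inv (\<gamma> s x) $ j $ i = matrix_inv (\<gamma> s x) $ i $ j"
          by (metis transpose_nth)
      qed
      then show ?thesis by (simp add: vec_eq_iff transpose_def P'_def)
    qed
    have t: "transpose (c *\<^sub>R M) = c *\<^sub>R transpose M" for c and M :: "real^('n \<times> 'd)^('n \<times> 'd)"
      by (simp add: vec_eq_iff transpose_nth)
    show ?thesis unfolding Ztilde_def A_def mem_Collect_eq t sy using block_diag_scale[OF bd] by blast
  qed
  have Aeq: "\<phi> (x,q) = (q \<bullet> (A x *v q) - trace (A x ** C x)) * f (x,q)" if x: "x \<in> \<Omega>" for x q
  proof -
    let ?g = "\<lambda>s. \<gamma> s x"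
    have gZx: "\<forall>s. ?g s \<in> Zset" using gZ x by blast
    have mP: "mder (\<lambda>s. matrix_inv (?g s)) (P' x) 0"
      unfolding P'_def by (rule Phi_curve_mder[OF gZx]) (use gD x in blast)
    have C0: "\<gamma> 0 x = C x"
      by (rule Phi_inj) (use gZ CZ x g0 fC in auto)
    let ?P0 = "matrix_inv (?g 0)"
    have iP0: "invertible ?P0" using Zset_props(7) gZx by blast
    have mg: "mder ?g (- (matrix_inv ?P0 ** P' x ** matrix_inv ?P0)) 0"
    proof -
      have "mder (\<lambda>s. matrix_inv (matrix_inv (?g s))) (- (matrix_inv ?P0 ** P' x ** matrix_inv ?P0)) 0"
        by (rule inv_DERIV[OF mP iP0])
      moreover have "(\<lambda>s. matrix_inv (matrix_inv (?g s))) = ?g"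
        using Zset_props(8) gZx by auto
      ultimately show ?thesis by simp
    qed
    have ii: "matrix_inv ?P0 = ?g 0" using Zset_props(8) gZx by blast
    have mg': "mder ?g (- (?g 0 ** P' x ** ?g 0)) 0" using mg unfolding ii .
    have D2: "((\<lambda>s. Phi (?g s) q) has_real_derivative
        Phi (?g 0) q * (qf q (?P0 ** (- (?g 0 ** P' x ** ?g 0)) ** ?P0) / 2
                        - trace (?P0 ** (- (?g 0 ** P' x ** ?g 0))) / 2)) (at 0)"
      by (rule Phi_DERIV[OF mg']) (use Zset_props(1,2) gZx in blast)+
    have e1: "?P0 ** (- (?g 0 ** P' x ** ?g 0)) ** ?P0 = - P' x"
      unfolding mm_neg_l mm_neg_r sandwich_cancel(1)[OF Zset_props(10,9)[OF gZx[rule_format]]] ..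
    have e2: "?P0 ** (- (?g 0 ** P' x ** ?g 0)) = - (P' x ** ?g 0)"
      unfolding mm_neg_l mm_neg_r sandwich_cancel(2)[OF Zset_props(10,9)[OF gZx[rule_format]]] ..
    have "\<phi> (x,q) = Phi (?g 0) q * (qf q (?P0 ** (- (?g 0 ** P' x ** ?g 0)) ** ?P0) / 2
                        - trace (?P0 ** (- (?g 0 ** P' x ** ?g 0))) / 2)"
    proof -
      have gDx: "((\<lambda>s. Phi (?g s) q) has_real_derivative \<phi> (x,q)) (at 0)" using gD x by blast
      show ?thesis using DERIV_unique[OF gDx D2] .
    qed
    also have "\<dots> = f (x,q) * (- qf q (P' x) / 2 + trace (P' x ** C x) / 2)"
    proof -
      have fx: "Phi (?g 0) q = f (x,q)" using g0 x by blast
      show ?thesis unfolding e1 unfolding e2 unfolding qf_neg trace_neg fx unfolding C0 by (simp add: algebra_simps)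
    qed
    also have "\<dots> = (q \<bullet> (A x *v q) - trace (A x ** C x)) * f (x,q)"
      unfolding qf_def[symmetric] A_def mm_scale_l trace_scale qf_scale by (simp add: algebra_simps)
    finally show ?thesis .
  qed
  show ?thesis using AZ Aeq by blast
qed


lemma tangent_sup:
  fixes C :: "real^'d::finite \<Rightarrow> real^('n::finite \<times> 'd)^('n \<times> 'd)"
    and f :: "((real^'d) \<times> (real^('n \<times> 'd))) \<Rightarrow> real"
  assumes CZ: "\<forall>x\<in>\<Omega>. C x \<in> Zset" and fC: "\<forall>x\<in>\<Omega>. \<forall>q. f (x,q) = Phi (C x) q"
    and H: "\<phi> \<in> Hspace \<Omega>" and AZ: "\<forall>x\<in>\<Omega>. A x \<in> Ztilde"
    and Aeq: "\<forall>x\<in>\<Omega>. \<forall>q. \<phi> (x,q) = (q \<bullet> (A x *v q) - trace (A x ** C x)) * f (x,q)"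
  shows "\<phi> \<in> tangent_space \<Omega> f"
proof -
  define X where "X x = C x ** A x" for x
  define Y where "Y s x = mat 1 + s *\<^sub>R X x" for s x
  define \<gamma> where "\<gamma> s x = (if invertible (Y s x) then Y s x ** C x ** transpose (Y s x) else C x)" for s x
  have Y0: "Y 0 x = mat 1" for x by (simp add: Y_def)
  have inv1: "invertible (mat 1 :: real^('n \<times> 'd)^('n \<times> 'd))"
    unfolding invertible_def by (auto simp: matrix_mul_lid)
  have g0: "\<gamma> 0 x = C x" for x
    unfolding \<gamma>_def Y0 using inv1 by (simp add: matrix_mul_lid matrix_mul_rid transpose_mat)
  have gZ: "\<gamma> s x \<in> Zset" if x: "x \<in> \<Omega>" for s x
  proof (cases "invertible (Y s x)")
    case False then show ?thesis using CZ x by (simp add: \<gamma>_def)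
  next
    case True
    have CZx: "C x \<in> Zset" using CZ x by blast
    have bA: "block_diag (A x)" using AZ x by (simp add: Ztilde_def)
    have bY: "block_diag (Y s x)" unfolding Y_def X_def
      by (intro block_diag_add block_diag_one block_diag_scale block_diag_mult bA Zset_props(4)[OF CZx])
    have bd: "block_diag (Y s x ** C x ** transpose (Y s x))"
      by (intro block_diag_mult block_diag_transpose bY Zset_props(4)[OF CZx])
    have sy: "transpose (Y s x ** C x ** transpose (Y s x)) = Y s x ** C x ** transpose (Y s x)"
      by (simp add: matrix_transpose_mul Zset_props(3)[OF CZx] matrix_mul_assoc)
    have pd: "v \<bullet> ((Y s x ** C x ** transpose (Y s x)) *v v) > 0" if v: "v \<noteq> 0" for v
    proof -
      let ?w = "transpose (Y s x) *v v"
      have it: "invertible (transpose (Y s x))" using invertible_transpose'(1)[OF True] .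
      have w: "?w \<noteq> 0"
      proof
        assume "?w = 0"
        then have "matrix_inv (transpose (Y s x)) *v ?w = 0" by simp
        then have "v = 0" by (simp only: matrix_vector_mul_assoc inv_mat(2)[OF it] matrix_vector_mul_lid)
        with v show False by simp
      qed
      have "v \<bullet> ((Y s x ** C x ** transpose (Y s x)) *v v) = v \<bullet> (Y s x *v (C x *v ?w))"
        by (simp only: matrix_vector_mul_assoc matrix_mul_assoc)
      also have "\<dots> = ?w \<bullet> (C x *v ?w)" by (simp only: dot_mat)
      also have "\<dots> > 0" using CZx w by (simp add: Zset_def)
      finally show ?thesis .
    qed
    show ?thesis using True bd sy pd by (simp add: \<gamma>_def Zset_def)
  qed
  have gD: "((\<lambda>s. Phi (\<gamma> s x) q) has_real_derivative \<phi> (x,q)) (at 0)" if x: "x \<in> \<Omega>" for x q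
  proof -
    have CZx: "C x \<in> Zset" using CZ x by blast
    have mY: "mder (\<lambda>s. Y s x) (X x) 0"
    proof -
      have "mder (\<lambda>s. mat 1 + s *\<^sub>R X x) (0 + 1 *\<^sub>R X x) 0"
        by (intro mder_add mder_const mder_fscale DERIV_ident)
      then show ?thesis by (simp add: Y_def)
    qed
    have evY: "eventually (\<lambda>s. invertible (Y s x)) (nhds 0)"
      by (rule eventually_invertible[OF mY]) (simp add: Y0 inv1)
    have mZ: "mder (\<lambda>s. Y s x ** C x ** transpose (Y s x))
        ((X x ** C x + Y 0 x ** 0) ** transpose (Y 0 x) + (Y 0 x ** C x) ** transpose (X x)) 0"
      by (intro mder_mult mder_transpose mY mder_const)
    have XA: "transpose (X x) = A x ** C x"
      using AZ x Zset_props(3)[OF CZx] by (simp add: X_def matrix_transpose_mul Ztilde_def)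
    have val: "(X x ** C x + Y 0 x ** 0) ** transpose (Y 0 x) + (Y 0 x ** C x) ** transpose (X x)
        = 2 *\<^sub>R (C x ** A x ** C x)"
      unfolding Y0 XA by (simp add: mm_zero matrix_mul_lid matrix_mul_rid transpose_mat X_def
          matrix_mul_assoc scaleR_2)
    have mg: "mder (\<lambda>s. \<gamma> s x) (2 *\<^sub>R (C x ** A x ** C x)) 0"
    proof (rule mder_cong_ev[OF _ mZ[unfolded val]])
      show "eventually (\<lambda>s. Y s x ** C x ** transpose (Y s x) = \<gamma> s x) (nhds 0)"
        using evY by (rule eventually_mono) (simp add: \<gamma>_def)
    qed
    have D: "((\<lambda>s. Phi (\<gamma> s x) q) has_real_derivative
        Phi (\<gamma> 0 x) q * (qf q (matrix_inv (\<gamma> 0 x) ** (2 *\<^sub>R (C x ** A x ** C x)) ** matrix_inv (\<gamma> 0 x)) / 2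
          - trace (matrix_inv (\<gamma> 0 x) ** (2 *\<^sub>R (C x ** A x ** C x))) / 2)) (at 0)"
      by (rule Phi_DERIV[OF mg]) (simp_all add: g0 Zset_props(1,2)[OF CZx])
    have e1: "matrix_inv (C x) ** (2 *\<^sub>R (C x ** A x ** C x)) ** matrix_inv (C x) = 2 *\<^sub>R A x"
      unfolding mm_scale_l mm_scale_r sandwich_cancel(1)[OF Zset_props(10,9)[OF CZx]] ..
    have e2: "matrix_inv (C x) ** (2 *\<^sub>R (C x ** A x ** C x)) = 2 *\<^sub>R (A x ** C x)"
      unfolding mm_scale_r sandwich_cancel(2)[OF Zset_props(10,9)[OF CZx]] ..
    show ?thesis
    proof (rule DERIV_cong[OF D])
      show "Phi (\<gamma> 0 x) q * (qf q (matrix_inv (\<gamma> 0 x) ** (2 *\<^sub>R (C x ** A x ** C x)) ** matrix_inv (\<gamma> 0 x)) / 2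
          - trace (matrix_inv (\<gamma> 0 x) ** (2 *\<^sub>R (C x ** A x ** C x))) / 2) = \<phi> (x,q)"
        unfolding g0 e1 unfolding e2 qf_scale trace_scale
        using Aeq fC x by (simp add: qf_def)
    qed
  qed
  show ?thesis unfolding tangent_space_def
    using H gZ gD g0 fC by (intro CollectI conjI exI[of _ \<gamma>]) auto
qed



lemma mv_scale_r: "(P::real^'m::finite^'m) *v (s *\<^sub>R e) = s *\<^sub>R (P *v e)"
  by (simp add: vec_eq_iff matrix_vector_mult_def sum_distrib_left algebra_simps)

lemma mv_neg_r: "(P::real^'m::finite^'m) *v (- e) = - (P *v e)"
  by (simp add: vec_eq_iff matrix_vector_mult_def sum_negf)

lemma qf_line: "qf (q + s *\<^sub>R e) (P::real^'m::finite^'m) =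
   qf q P + s * (e \<bullet> (P *v q) + q \<bullet> (P *v e)) + s^2 * qf e P"
  by (simp add: qf_def matrix_vector_right_distrib mv_scale_r inner_add_left inner_add_right
      algebra_simps power2_eq_square)

lemma sym_dot: "transpose (P::real^'m::finite^'m) = P \<Longrightarrow> q \<bullet> (P *v e) = e \<bullet> (P *v q)"
  by (metis dot_mat inner_commute)

lemma pd_DERIV: "((\<lambda>s. g (y + s *\<^sub>R axis k 1)) has_real_derivative D) (at 0) \<Longrightarrow> pd k g y = D"
  unfolding pd_def by (rule DERIV_imp_deriv)

lemma Phi_line_DERIV:
  fixes C0 :: "real^('n::finite \<times> 'd::finite)^('n \<times> 'd)"
  assumes CZ: "C0 \<in> Zset"
  shows "((\<lambda>s. Phi C0 (q + s *\<^sub>R e)) has_real_derivative - (e \<bullet> (matrix_inv C0 *v q)) * Phi C0 q) (at 0)"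
proof -
  let ?P = "matrix_inv C0"
  let ?S = "sqrt ((2 * pi) ^ CARD('n \<times> 'd) * det C0)"
  have sy: "transpose ?P = ?P" using Zset_props(5)[OF CZ] .
  have "((\<lambda>s. qf q ?P + s * (e \<bullet> (?P *v q) + q \<bullet> (?P *v e)) + s^2 * qf e ?P) has_real_derivative
      (e \<bullet> (?P *v q) + q \<bullet> (?P *v e))) (at 0)"
    by (auto intro!: derivative_eq_intros)
  then have qd: "((\<lambda>s. qf (q + s *\<^sub>R e) ?P) has_real_derivative 2 * (e \<bullet> (?P *v q))) (at 0)"
    unfolding qf_line sym_dot[OF sy, of q e] by simp
  have "((\<lambda>s. exp (- qf (q + s *\<^sub>R e) ?P / 2) / ?S) has_real_derivative
       exp (- qf (q + 0 *\<^sub>R e) ?P / 2) * (- (2 * (e \<bullet> (?P *v q))) / 2) / ?S) (at 0)"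
    by (intro DERIV_cdivide DERIV_fun_exp DERIV_minus qd)
  then show ?thesis unfolding Phi_alt by (simp add: mult_ac)
qed

lemma pd_Phi:
  fixes C0 :: "real^('n::finite \<times> 'd::finite)^('n \<times> 'd)"
  assumes CZ: "C0 \<in> Zset"
  shows "pd k (Phi C0) q = - (matrix_inv C0 *v q) $ k * Phi C0 q"
  using pd_DERIV[OF Phi_line_DERIV[OF CZ, of q "axis k 1"]] by (simp add: inner_axis')

lemma grad_Phi:
  fixes C0 :: "real^('n::finite \<times> 'd::finite)^('n \<times> 'd)"
  assumes CZ: "C0 \<in> Zset"
  shows "grad (Phi C0) q = (- Phi C0 q) *\<^sub>R (matrix_inv C0 *v q)"
  by (simp add: grad_def pd_Phi[OF CZ] vec_eq_iff)

lemma Lq_gen: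
  fixes C0 M KI :: "real^('n::finite \<times> 'd::finite)^('n \<times> 'd)"
  assumes CZ: "C0 \<in> Zset"
  shows "- (\<Sum>k\<in>UNIV. pd k (\<lambda>q'. (M *v q') $ k * Phi C0 q' + c * (KI *v grad (Phi C0) q') $ k) q)
    = (((M - c *\<^sub>R (KI ** matrix_inv C0)) *v q) \<bullet> (matrix_inv C0 *v q) - trace (M - c *\<^sub>R (KI ** matrix_inv C0))) * Phi C0 q"
proof -
  let ?P = "matrix_inv C0"
  let ?G = "M - c *\<^sub>R (KI ** ?P)"
  have h: "(\<lambda>q'. (M *v q') $ k * Phi C0 q' + c * (KI *v grad (Phi C0) q') $ k) =
      (\<lambda>q'. (?G *v q') $ k * Phi C0 q')" for k
  proof
    fix q'
    show "(M *v q') $ k * Phi C0 q' + c * (KI *v grad (Phi C0) q') $ k = (?G *v q') $ k * Phi C0 q'"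
      unfolding grad_Phi[OF CZ]
      by (simp add: mv_diff mv_scale mv_scale_r mv_neg_r matrix_vector_mul_assoc[symmetric] algebra_simps)
  qed
  have pk: "pd k (\<lambda>q'. (?G *v q') $ k * Phi C0 q') q =
      ?G $ k $ k * Phi C0 q + (?G *v q) $ k * (- (?P *v q) $ k * Phi C0 q)" for k
  proof (rule pd_DERIV)
    have l: "((\<lambda>s. (?G *v (q + s *\<^sub>R axis k 1)) $ k) has_real_derivative ?G $ k $ k) (at 0)"
    proof -
      have "((\<lambda>s. (?G *v q) $ k + s * (?G *v axis k 1) $ k) has_real_derivative (?G *v axis k 1) $ k) (at 0)"
        by (auto intro!: derivative_eq_intros)
      moreover have "(?G *v axis k 1) $ k = ?G $ k $ k"
        using axis_mat[of k ?G k] by (simp add: inner_axis')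
      ultimately show ?thesis by (simp add: matrix_vector_right_distrib mv_scale_r)
    qed
    have "((\<lambda>s. (?G *v (q + s *\<^sub>R axis k 1)) $ k * Phi C0 (q + s *\<^sub>R axis k 1)) has_real_derivative
        ?G $ k $ k * Phi C0 (q + 0 *\<^sub>R axis k 1) + (?G *v (q + 0 *\<^sub>R axis k 1)) $ k * (- (axis k 1 \<bullet> (?P *v q)) * Phi C0 q)) (at 0)"
      by (rule DM[OF l Phi_line_DERIV[OF CZ]])
    then show "((\<lambda>s. (?G *v (q + s *\<^sub>R axis k 1)) $ k * Phi C0 (q + s *\<^sub>R axis k 1)) has_real_derivative
        ?G $ k $ k * Phi C0 q + (?G *v q) $ k * (- (?P *v q) $ k * Phi C0 q)) (at 0)"
      by (simp add: inner_axis')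
  qed
  define G where "G = ?G"
  define Pq where "Pq = ?P *v q"
  have "(\<Sum>k\<in>UNIV. G $ k $ k * Phi C0 q + (G *v q) $ k * (- Pq $ k * Phi C0 q))
      = trace G * Phi C0 q - ((G *v q) \<bullet> Pq) * Phi C0 q"
    by (simp add: trace_def inner_vec_def sum.distrib sum_distrib_left sum_subtractf algebra_simps)
  then show ?thesis unfolding h unfolding pk unfolding G_def[symmetric] Pq_def[symmetric] by (simp add: algebra_simps)
qed


lemma trace_transpose: "trace (transpose (A::real^'m::finite^'m)) = trace A"
  by (simp add: trace_def transpose_def)

lemma Aq_alg:
  fixes C0 M KI :: "real^'m::finite^'m" and De :: real
  assumes CZ: "C0 ** matrix_inv C0 = mat 1" "matrix_inv C0 ** C0 = mat 1"
    and sy: "transpose (matrix_inv C0) = matrix_inv C0"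
  defines "P \<equiv> matrix_inv C0"
  defines "G \<equiv> M - (1 / (2 * De)) *\<^sub>R (KI ** P)"
  defines "AA \<equiv> (1/2) *\<^sub>R (P ** (M ** C0 + C0 ** transpose M - (1 / De) *\<^sub>R KI) ** P)"
  shows "(G *v q) \<bullet> (P *v q) = q \<bullet> (AA *v q)" "trace G = trace (AA ** C0)"
proof -
  have c1: "P ** C0 = mat 1" "C0 ** P = mat 1" using CZ by (simp_all add: P_def)
  have h1: "P ** (M ** C0) ** P = P ** M"
  proof -
    have "P ** (M ** C0) ** P = ((P ** M) ** C0) ** P" by (simp only: matrix_mul_assoc)
    then show ?thesis using sandwich_cancel(4)[OF c1] by simp
  qed
  have h2: "P ** (C0 ** transpose M) ** P = transpose M ** P"
    using sandwich_cancel(3)[OF c1] by simp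
  have h3: "transpose (P ** M) = transpose M ** P"
    using sy by (simp add: matrix_transpose_mul P_def)
  have "(G *v q) \<bullet> (P *v q) = q \<bullet> ((P ** G) *v q)"
  proof -
    have "q \<bullet> ((P ** G) *v q) = (P *v q) \<bullet> (G *v q)"
      by (simp only: matrix_vector_mul_assoc[symmetric] dot_mat sy[folded P_def])
    then show ?thesis by (simp add: inner_commute)
  qed
  also have "\<dots> = qf q (P ** M) - (1 / (2 * De)) * qf q (P ** KI ** P)"
    by (simp only: qf_def[symmetric] G_def mm_diff_r mm_scale_r qf_diff qf_scale matrix_mul_assoc)
  also have "\<dots> = q \<bullet> (AA *v q)"
    unfolding qf_def[symmetric] AA_def mm_diff_l mm_diff_r mm_add_l mm_add_r mm_scale_l mm_scale_r h1 h2
      qf_scale qf_diff qf_add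
    unfolding h3[symmetric] qf_transpose by (simp add: algebra_simps)
  finally show "(G *v q) \<bullet> (P *v q) = q \<bullet> (AA *v q)" .
  have t1: "trace (P ** (M ** C0)) = trace M"
  proof -
    have "trace (P ** (M ** C0)) = trace ((M ** C0) ** P)" by (rule trace_mul_sym)
    then show ?thesis using sandwich_cancel(4)[OF c1] by simp
  qed
  have t2: "trace (P ** (C0 ** transpose M)) = trace M"
    using sandwich_cancel(3)[OF c1] trace_transpose by simp
  have t3: "trace (KI ** P) = trace (P ** KI)" by (rule trace_mul_sym)
  have eqA: "AA ** C0 = (1/2) *\<^sub>R (P ** (M ** C0 + C0 ** transpose M - (1 / De) *\<^sub>R KI))"
    unfolding AA_def mm_scale_l using sandwich_cancel(4)[OF c1(2,1)] by simp
  show "trace G = trace (AA ** C0)"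
    unfolding eqA G_def mm_diff_r mm_add_r mm_scale_r trace_scale trace_sub trace_add t1 t2 t3
    by (simp add: algebra_simps)
qed

lemma kron_diag:
  shows "block_diag (kron_I (diag_mat lam) :: real^('n::finite \<times> 'd::finite)^('n \<times> 'd))"
    "transpose (kron_I (diag_mat lam) :: real^('n::finite \<times> 'd::finite)^('n \<times> 'd)) = kron_I (diag_mat lam)"
  by (auto simp: block_diag_def kron_I_def diag_mat_def transpose_def vec_eq_iff)

lemma I_kron_bd: "block_diag (I_kron J :: real^('n::finite \<times> 'd::finite)^('n \<times> 'd))"
  by (auto simp: block_diag_def I_kron_def)

lemma Ztilde_sand:
  fixes C0 Z :: "real^('n::finite \<times> 'd::finite)^('n \<times> 'd)"
  assumes CZ: "C0 \<in> Zset" and bd: "block_diag Z" and sy: "transpose Z = Z"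
  shows "c *\<^sub>R (matrix_inv C0 ** Z ** matrix_inv C0) \<in> Ztilde"
proof -
  have "block_diag (c *\<^sub>R (matrix_inv C0 ** Z ** matrix_inv C0))"
    by (intro block_diag_scale block_diag_mult bd Zset_props(6)[OF CZ])
  moreover have "transpose (c *\<^sub>R (matrix_inv C0 ** Z ** matrix_inv C0)) = c *\<^sub>R (matrix_inv C0 ** Z ** matrix_inv C0)"
    using sy Zset_props(5)[OF CZ] by (simp add: matrix_transpose_mul transpose_scalar matrix_mul_assoc)
  ultimately show ?thesis by (simp add: Ztilde_def)
qed



lemma curve_mder:
  fixes g :: "real^'d::finite \<Rightarrow> real^'m::finite^'m"
  assumes "g differentiable (at (y + s0 *\<^sub>R e))"
  shows "mder (\<lambda>s. g (y + s *\<^sub>R e)) (frechet_derivative g (at (y + s0 *\<^sub>R e)) e) s0"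
  unfolding mder_def
proof (intro allI)
  fix i j
  let ?G = "frechet_derivative g (at (y + s0 *\<^sub>R e))"
  have g: "(g has_derivative ?G) (at (y + s0 *\<^sub>R e))"
    using assms frechet_derivative_works by blast
  have l: "((\<lambda>s. y + s *\<^sub>R e) has_derivative (\<lambda>h. h *\<^sub>R e)) (at s0)"
    by (auto intro!: derivative_eq_intros)
  have c: "((\<lambda>s. g (y + s *\<^sub>R e)) has_derivative (\<lambda>h. ?G (h *\<^sub>R e))) (at s0)"
    using diff_chain_at[OF l] g by (simp add: o_def)
  have lin: "linear ?G" using has_derivative_linear[OF g] .
  have bl: "bounded_linear (\<lambda>A::real^'m^'m. A $ i $ j)"
    using bounded_linear_compose[OF bounded_linear_vec_nth bounded_linear_vec_nth] .
  have "((\<lambda>s. g (y + s *\<^sub>R e) $ i $ j) has_derivative (\<lambda>h. ?G (h *\<^sub>R e) $ i $ j)) (at s0)"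
    using bounded_linear.has_derivative[OF bl c] .
  moreover have "(\<lambda>h. ?G (h *\<^sub>R e) $ i $ j) = (\<lambda>h. (?G e $ i $ j) * h)"
    using linear_scale[OF lin] by (auto simp: mult.commute)
  ultimately show "((\<lambda>s. g (y + s *\<^sub>R e) $ i $ j) has_real_derivative ?G e $ i $ j) (at s0)"
    by (simp add: has_field_derivative_def)
qed

lemma ev_line:
  fixes y :: "real^'d::finite"
  assumes "open \<Omega>" "y \<in> \<Omega>"
  shows "eventually (\<lambda>s. y + s *\<^sub>R e \<in> \<Omega>) (nhds 0)"
proof -
  have o: "open ((\<lambda>s::real. y + s *\<^sub>R e) -` \<Omega>)"
    by (rule continuous_open_vimage[OF assms(1)]) (intro continuous_intros)
  have "0 \<in> (\<lambda>s::real. y + s *\<^sub>R e) -` \<Omega>" using assms(2) by simp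
  then show ?thesis using o unfolding eventually_nhds by blast
qed


lemma pd_local:
  fixes y :: "real^'d::finite"
  assumes "open \<Omega>" "y \<in> \<Omega>" "\<forall>z\<in>\<Omega>. g z = h z"
  shows "pd a g y = pd a h y"
  unfolding pd_def
proof (rule deriv_cong_ev)
  show "eventually (\<lambda>s. g (y + s *\<^sub>R axis a 1) = h (y + s *\<^sub>R axis a 1)) (nhds 0)"
    using ev_line[OF assms(1,2)] by (rule eventually_mono) (use assms(3) in blast)
qed simp

lemma pd_const: "pd a (\<lambda>z. c) y = 0"
  by (simp add: pd_def)

lemma pd_entry:
  fixes G :: "real^'d::finite \<Rightarrow> real^'m::finite^'m"
  assumes "open \<Omega>" "G differentiable_on \<Omega>" "y \<in> \<Omega>"
  shows "pd a (\<lambda>z. G z $ i $ j) y = frechet_derivative G (at y) (axis a 1) $ i $ j"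
proof -
  have "G differentiable (at (y + 0 *\<^sub>R axis a 1))"
    using assms differentiable_on_eq_differentiable_at by auto
  from curve_mder[OF this] have "mder (\<lambda>s. G (y + s *\<^sub>R axis a 1)) (frechet_derivative G (at y) (axis a 1)) 0"
    by simp
  then show ?thesis unfolding mder_def by (intro pd_DERIV) blast
qed

lemma smooth_C2:
  fixes C :: "real^'d::finite \<Rightarrow> real^'m::finite^'m"
  assumes "smooth_on \<Omega> C"
  shows "C differentiable_on \<Omega>" "(\<lambda>z. frechet_derivative C (at z) (axis a 1)) differentiable_on \<Omega>"
proof -
  have b: "(axis a (1::real) :: real^'d) \<in> Basis" by simp
  have "Ck (Suc (Suc 0)) \<Omega> C" using assms unfolding smooth_on_def by blast
  then have h: "C differentiable_on \<Omega> \<and> (\<forall>b\<in>Basis. Ck (Suc 0) \<Omega> (\<lambda>x. frechet_derivative C (at x) b))"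
    by (subst (asm) Ck.simps(2))
  then have h: "C differentiable_on \<Omega>" "\<forall>b\<in>Basis. Ck (Suc 0) \<Omega> (\<lambda>x. frechet_derivative C (at x) b)"
    by blast+
  show "C differentiable_on \<Omega>" by (rule h(1))
  have "Ck (Suc 0) \<Omega> (\<lambda>x. frechet_derivative C (at x) (axis a 1))" using bspec[OF h(2) b] .
  then show "(\<lambda>z. frechet_derivative C (at z) (axis a 1)) differentiable_on \<Omega>"
    by (subst (asm) Ck.simps(2)) blast
qed

definition C1 :: "'d::finite \<Rightarrow> (real^'d \<Rightarrow> real^'m::finite^'m) \<Rightarrow> real^'d \<Rightarrow> real^'m^'m" where
  "C1 a C y = frechet_derivative C (at y) (axis a 1)"

definition C2 :: "'d::finite \<Rightarrow> (real^'d \<Rightarrow> real^'m::finite^'m) \<Rightarrow> real^'d \<Rightarrow> real^'m^'m" where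
  "C2 a C y = frechet_derivative (C1 a C) (at y) (axis a 1)"

definition psi :: "real^'m::finite \<Rightarrow> real^'m^'m \<Rightarrow> real^'m^'m \<Rightarrow> real" where
  "psi q c d = qf q (matrix_inv c ** d ** matrix_inv c) / 2 - trace (matrix_inv c ** d) / 2"

lemma pd_f:
  fixes C :: "real^'d::finite \<Rightarrow> real^('n::finite \<times> 'd)^('n \<times> 'd)"
  assumes op: "open \<Omega>" and CZ: "\<forall>x\<in>\<Omega>. C x \<in> Zset" and fC: "\<forall>x\<in>\<Omega>. \<forall>q. f (x,q) = Phi (C x) q"
    and sm: "smooth_on \<Omega> C" and y: "y \<in> \<Omega>"
  shows "pd a (\<lambda>x'. f (x',q)) y = Phi (C y) q * psi q (C y) (C1 a C y)"
proof -
  have "C differentiable (at (y + 0 *\<^sub>R axis a 1))"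
    using smooth_C2(1)[OF sm] op y differentiable_on_eq_differentiable_at by auto
  from curve_mder[OF this] have m: "mder (\<lambda>s. C (y + s *\<^sub>R axis a 1)) (C1 a C y) 0"
    by (simp add: C1_def)
  have CZy: "C y \<in> Zset" using CZ y by blast
  have D: "((\<lambda>s. Phi (C (y + s *\<^sub>R axis a 1)) q) has_real_derivative Phi (C y) q * psi q (C y) (C1 a C y)) (at 0)"
    using Phi_DERIV[OF m] Zset_props(1,2)[OF CZy] by (simp add: psi_def)
  have ev: "eventually (\<lambda>s. Phi (C (y + s *\<^sub>R axis a 1)) q = f (y + s *\<^sub>R axis a 1, q)) (nhds 0)"
    using ev_line[OF op y, of "axis a 1"] by (rule eventually_mono) (use fC in auto)
  show ?thesis
    by (rule pd_DERIV) (use D DERIV_cong_ev[OF refl ev refl] in blast)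
qed


definition psid :: "real^'m::finite \<Rightarrow> real^'m^'m \<Rightarrow> real^'m^'m \<Rightarrow> real^'m^'m \<Rightarrow> real" where
  "psid q c d dd = (let P = matrix_inv c; P' = - (P ** d ** P) in
     qf q ((P' ** d + P ** dd) ** P + (P ** d) ** P') / 2 - trace (P' ** d + P ** dd) / 2)"

lemma pdpd_f:
  fixes C :: "real^'d::finite \<Rightarrow> real^('n::finite \<times> 'd)^('n \<times> 'd)"
  assumes op: "open \<Omega>" and CZ: "\<forall>x\<in>\<Omega>. C x \<in> Zset" and fC: "\<forall>x\<in>\<Omega>. \<forall>q. f (x,q) = Phi (C x) q"
    and sm: "smooth_on \<Omega> C" and x: "x \<in> \<Omega>"
  shows "pd a (pd a (\<lambda>x'. f (x',q))) x =
     Phi (C x) q * psi q (C x) (C1 a C x) * psi q (C x) (C1 a C x) + Phi (C x) q * psid q (C x) (C1 a C x) (C2 a C x)"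
proof -
  define e where "e = (axis a 1 :: real^'d)"
  define c where "c = (\<lambda>s. C (x + s *\<^sub>R e))"
  define D where "D = (\<lambda>s. C1 a C (x + s *\<^sub>R e))"
  have c0: "c 0 = C x" and D0: "D 0 = C1 a C x" by (simp_all add: c_def D_def)
  have "C differentiable (at (x + 0 *\<^sub>R e))"
    using smooth_C2(1)[OF sm] op x differentiable_on_eq_differentiable_at by auto
  from curve_mder[OF this] have mc: "mder c (C1 a C x) 0"
    by (simp add: C1_def c_def e_def)
  have "C1 a C differentiable (at (x + 0 *\<^sub>R e))"
    using smooth_C2(2)[OF sm, of a] op x differentiable_on_eq_differentiable_at
    unfolding C1_def[abs_def] by auto
  from curve_mder[OF this] have mD: "mder D (C2 a C x) 0"
    by (simp add: C2_def D_def e_def)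
  have CZx: "C x \<in> Zset" using CZ x by blast
  have ic: "invertible (c 0)" "det (c 0) > 0" using Zset_props(1,2)[OF CZx] c0 by auto
  let ?P = "matrix_inv (C x)"
  let ?P' = "- (?P ** C1 a C x ** ?P)"
  have mP: "mder (\<lambda>s. matrix_inv (c s)) ?P' 0"
    using inv_DERIV[OF mc ic(1)] unfolding c0 .
  have mPD: "mder (\<lambda>s. matrix_inv (c s) ** D s) (?P' ** C1 a C x + ?P ** C2 a C x) 0"
    using mder_mult[OF mP mD] unfolding c0 D0 .
  have mPDP: "mder (\<lambda>s. matrix_inv (c s) ** D s ** matrix_inv (c s))
      ((?P' ** C1 a C x + ?P ** C2 a C x) ** ?P + (?P ** C1 a C x) ** ?P') 0"
    using mder_mult[OF mPD mP] unfolding c0 D0 .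
  have dpsi: "((\<lambda>s. psi q (c s) (D s)) has_real_derivative psid q (C x) (C1 a C x) (C2 a C x)) (at 0)"
    unfolding psi_def psid_def Let_def
    by (intro DERIV_diff DERIV_cdivide qf_DERIV trace_DERIV mPDP mPD)
  have dPhi: "((\<lambda>s. Phi (c s) q) has_real_derivative Phi (C x) q * psi q (C x) (C1 a C x)) (at 0)"
    using Phi_DERIV[OF mc ic] unfolding c0 psi_def .
  have dprod: "((\<lambda>s. Phi (c s) q * psi q (c s) (D s)) has_real_derivative
      Phi (C x) q * psi q (C x) (C1 a C x) * psi q (C x) (C1 a C x) + Phi (C x) q * psid q (C x) (C1 a C x) (C2 a C x)) (at 0)"
    using DM[OF dPhi dpsi] unfolding c0 D0 .
  have ev: "eventually (\<lambda>s. Phi (c s) q * psi q (c s) (D s) = pd a (\<lambda>x'. f (x',q)) (x + s *\<^sub>R e)) (nhds 0)"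
    using ev_line[OF op x, of e]
  proof (rule eventually_mono)
    fix s assume "x + s *\<^sub>R e \<in> \<Omega>"
    then show "Phi (c s) q * psi q (c s) (D s) = pd a (\<lambda>x'. f (x',q)) (x + s *\<^sub>R e)"
      using pd_f[OF op CZ fC sm] by (simp add: c_def D_def)
  qed
  show ?thesis
    by (rule pd_DERIV) (use dprod DERIV_cong_ev[OF refl ev refl] in \<open>simp add: e_def\<close>)
qed



lemma psi_sq_psid:
  fixes c d dd :: "real^'m::finite^'m"
  shows "psi q c d * psi q c d + psid q c d dd =
    (qf q (matrix_inv c ** dd ** matrix_inv c) / 2 - trace (matrix_inv c ** dd) / 2)
    - (let B = matrix_inv c ** d in
       q \<bullet> ((B ** B ** matrix_inv c) *v q) - (1/2) * trace (B ** B)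
       - (1/4) * (q \<bullet> ((B ** matrix_inv c) *v q) - trace B)\<^sup>2)"
proof -
  define P where "P = matrix_inv c"
  have e1: "(- (P ** d ** P) ** d + P ** dd) ** P + P ** d ** - (P ** d ** P) =
      (- 2) *\<^sub>R (P ** d ** P ** d ** P) + P ** dd ** P"
    by (simp only: mm_lin matrix_mul_assoc scaleR_2 scaleR_minus_left) (simp add: algebra_simps)
  have e2: "- (P ** d ** P) ** d + P ** dd = - (P ** d ** P ** d) + P ** dd"
    by (simp only: mm_lin matrix_mul_assoc)
  show ?thesis
    unfolding psi_def psid_def Let_def P_def[symmetric] unfolding e1 unfolding e2 qf_def[symmetric]
      qf_add qf_scale trace_add trace_neg matrix_mul_assoc
    by (simp add: power2_eq_square algebra_simps) (simp add: field_simps)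
qed


lemma pd_C:
  fixes C :: "real^'d::finite \<Rightarrow> real^'m::finite^'m"
  assumes op: "open \<Omega>" and sm: "smooth_on \<Omega> C" and x: "x \<in> \<Omega>"
  shows "pd a (\<lambda>x'. C x' $ i $ j) x = C1 a C x $ i $ j"
  unfolding C1_def by (rule pd_entry[OF op smooth_C2(1)[OF sm] x])

lemma pdpd_C:
  fixes C :: "real^'d::finite \<Rightarrow> real^'m::finite^'m"
  assumes op: "open \<Omega>" and sm: "smooth_on \<Omega> C" and x: "x \<in> \<Omega>"
  shows "pd a (pd a (\<lambda>x'. C x' $ i $ j)) x = C2 a C x $ i $ j"
proof -
  have "pd a (pd a (\<lambda>x'. C x' $ i $ j)) x = pd a (\<lambda>y. C1 a C y $ i $ j) x"
    by (rule pd_local[OF op x]) (use pd_C[OF op sm] in blast)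
  also have "\<dots> = C2 a C x $ i $ j"
    unfolding C2_def
    by (rule pd_entry[OF op _ x]) (use smooth_C2(2)[OF sm, of a] in \<open>simp add: C1_def[abs_def]\<close>)
  finally show ?thesis .
qed

lemma Lx_mat_eq:
  fixes C :: "real^'d::finite \<Rightarrow> real^'m::finite^'m"
  assumes op: "open \<Omega>" and sm: "smooth_on \<Omega> C" and x: "x \<in> \<Omega>"
  shows "Lx_mat u \<epsilon> t C x = (\<Sum>a\<in>UNIV. (u t x $ a) *\<^sub>R C1 a C x) - \<epsilon> *\<^sub>R (\<Sum>a\<in>UNIV. C2 a C x)"
  by (simp add: Lx_mat_def vec_eq_iff inner_vec_def grad_def lap_def pd_C[OF op sm x] pdpd_C[OF op sm x])

lemma dmat_eq:
  fixes C :: "real^'d::finite \<Rightarrow> real^'m::finite^'m"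
  assumes op: "open \<Omega>" and sm: "smooth_on \<Omega> C" and x: "x \<in> \<Omega>"
  shows "dmat a C x = C1 a C x"
  by (simp add: dmat_def vec_eq_iff pd_C[OF op sm x])

lemma Lx_f_eq:
  fixes C :: "real^'d::finite \<Rightarrow> real^('n::finite \<times> 'd)^('n \<times> 'd)"
  assumes op: "open \<Omega>" and CZ: "\<forall>x\<in>\<Omega>. C x \<in> Zset" and fC: "\<forall>x\<in>\<Omega>. \<forall>q. f (x,q) = Phi (C x) q"
    and sm: "smooth_on \<Omega> C" and x: "x \<in> \<Omega>"
  shows "Lx u \<epsilon> t f (x,q) = (\<Sum>a\<in>UNIV. u t x $ a * (Phi (C x) q * psi q (C x) (C1 a C x)))
     - \<epsilon> * (\<Sum>a\<in>UNIV. Phi (C x) q * psi q (C x) (C1 a C x) * psi q (C x) (C1 a C x)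
                       + Phi (C x) q * psid q (C x) (C1 a C x) (C2 a C x))"
  unfolding Lx_def grad_def lap_def inner_vec_def
  using pd_f[OF op CZ fC sm x] pdpd_f[OF op CZ fC sm x] by simp


lemma partiii:
  fixes C :: "real^'d::finite \<Rightarrow> real^('n::finite \<times> 'd)^('n \<times> 'd)"
  assumes op: "open \<Omega>" and CZ: "\<forall>x\<in>\<Omega>. C x \<in> Zset" and fC: "\<forall>x\<in>\<Omega>. \<forall>q. f (x,q) = Phi (C x) q"
    and sm: "smooth_on \<Omega> C" and x: "x \<in> \<Omega>"
  shows "Lx u \<epsilon> t f (x,q) =
        (q \<bullet> (Ax u \<epsilon> t C x *v q) - trace (Ax u \<epsilon> t C x ** C x)) * f (x,q)
        + \<epsilon> * rho C x q * f (x,q)"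
proof -
  have CZx: "C x \<in> Zset" using CZ x by blast
  define P where "P = matrix_inv (C x)"
  define F where "F = Phi (C x) q"
  define d where "d a = C1 a C x" for a
  define dd where "dd a = C2 a C x" for a
  define ua where "ua a = u t x $ a" for a
  define ra where "ra a = (let B = P ** d a in
       q \<bullet> ((B ** B ** P) *v q) - (1/2) * trace (B ** B) - (1/4) * (q \<bullet> ((B ** P) *v q) - trace B)\<^sup>2)" for a
  have fx: "f (x,q) = F" using fC x by (simp add: F_def)
  have rho: "rho C x q = (\<Sum>a\<in>UNIV. ra a)"
    unfolding rho_def ra_def P_def d_def dmat_eq[OF op sm x] ..
  have per: "F * psi q (C x) (d a) * psi q (C x) (d a) + F * psid q (C x) (d a) (dd a)
      = F * (qf q (P ** dd a ** P) / 2 - trace (P ** dd a) / 2) - F * ra a" for a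
  proof -
    have e: "psi q (C x) (d a) * psi q (C x) (d a) + psid q (C x) (d a) (dd a)
        = (qf q (P ** dd a ** P) / 2 - trace (P ** dd a) / 2) - ra a"
      using psi_sq_psid[of q "C x" "d a" "dd a"] unfolding ra_def P_def qf_def .
    have "F * psi q (C x) (d a) * psi q (C x) (d a) + F * psid q (C x) (d a) (dd a)
        = F * (psi q (C x) (d a) * psi q (C x) (d a) + psid q (C x) (d a) (dd a))"
      by (simp add: algebra_simps)
    also have "\<dots> = F * ((qf q (P ** dd a ** P) / 2 - trace (P ** dd a) / 2) - ra a)" unfolding e ..
    finally show ?thesis by (simp add: right_diff_distrib)
  qed
  have psi: "psi q (C x) (d a) = qf q (P ** d a ** P) / 2 - trace (P ** d a) / 2" for a
    by (simp add: psi_def P_def)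
  have L: "Lx u \<epsilon> t f (x,q) = (\<Sum>a\<in>UNIV. ua a * (F * psi q (C x) (d a)))
      - \<epsilon> * (\<Sum>a\<in>UNIV. F * psi q (C x) (d a) * psi q (C x) (d a) + F * psid q (C x) (d a) (dd a))"
    unfolding Lx_f_eq[OF op CZ fC sm x] F_def d_def dd_def ua_def ..
  have c1: "P ** C x = mat 1" "C x ** P = mat 1" using Zset_props(10,9)[OF CZx] by (simp_all add: P_def)
  have Axe: "Ax u \<epsilon> t C x = (1/2) *\<^sub>R (P ** ((\<Sum>a\<in>UNIV. ua a *\<^sub>R d a) - \<epsilon> *\<^sub>R (\<Sum>a\<in>UNIV. dd a)) ** P)"
    unfolding Ax_def Lx_mat_eq[OF op sm x] P_def ua_def d_def dd_def ..
  have qA: "q \<bullet> (Ax u \<epsilon> t C x *v q) =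
      (1/2) * ((\<Sum>a\<in>UNIV. ua a * qf q (P ** d a ** P)) - \<epsilon> * (\<Sum>a\<in>UNIV. qf q (P ** dd a ** P)))"
    unfolding qf_def[symmetric] Axe
    by (simp only: mm_lin qf_lin matrix_mul_assoc)
  have tA: "trace (Ax u \<epsilon> t C x ** C x) =
      (1/2) * ((\<Sum>a\<in>UNIV. ua a * trace (P ** d a)) - \<epsilon> * (\<Sum>a\<in>UNIV. trace (P ** dd a)))"
  proof -
    have "Ax u \<epsilon> t C x ** C x = (1/2) *\<^sub>R (P ** ((\<Sum>a\<in>UNIV. ua a *\<^sub>R d a) - \<epsilon> *\<^sub>R (\<Sum>a\<in>UNIV. dd a)))"
      unfolding Axe mm_scale_l sandwich_cancel(4)[OF c1(2,1)] ..
    then show ?thesis by (simp only: mm_lin trace_lin)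
  qed
  have s1: "(\<Sum>a\<in>UNIV. F * psi q (C x) (d a) * psi q (C x) (d a) + F * psid q (C x) (d a) (dd a))
      = (\<Sum>a\<in>UNIV. F * (qf q (P ** dd a ** P) / 2 - trace (P ** dd a) / 2) - F * ra a)"
    by (rule sum.cong[OF refl]) (rule per)
  have s2: "(\<Sum>a\<in>UNIV. ua a * (F * psi q (C x) (d a))) =
      F * ((\<Sum>a\<in>UNIV. ua a * qf q (P ** d a ** P)) / 2 - (\<Sum>a\<in>UNIV. ua a * trace (P ** d a)) / 2)"
    unfolding psi by (simp add: sum_distrib_left sum_subtractf sum_divide_distrib algebra_simps)
  have s3: "(\<Sum>a\<in>UNIV. F * (qf q (P ** dd a ** P) / 2 - trace (P ** dd a) / 2) - F * ra a)
      = F * ((\<Sum>a\<in>UNIV. qf q (P ** dd a ** P)) / 2 - (\<Sum>a\<in>UNIV. trace (P ** dd a)) / 2) - F * (\<Sum>a\<in>UNIV. ra a)"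
    by (simp add: sum_distrib_left sum_subtractf sum_divide_distrib sum.distrib algebra_simps)
  show ?thesis
    unfolding L s1 s2 s3 qA tA rho fx
    by (simp add: algebra_simps)
qed


lemma Lx_entry_local:
  fixes g h :: "real^'d::finite \<Rightarrow> real"
  assumes op: "open \<Omega>" and x: "x \<in> \<Omega>" and gh: "\<forall>z\<in>\<Omega>. g z = h z"
  shows "v \<bullet> grad g x - \<epsilon> * lap g x = v \<bullet> grad h x - \<epsilon> * lap h x"
proof -
  have "grad g x = grad h x" unfolding grad_def using pd_local[OF op x gh] by simp
  moreover have "lap g x = lap h x"
  proof -
    have "pd k (pd k g) x = pd k (pd k h) x" for k
      by (rule pd_local[OF op x]) (use pd_local[OF op _ gh] in blast)
    then show ?thesis unfolding lap_def by simp
  qed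
  ultimately show ?thesis by simp
qed

lemma pd_const_fun: "pd k (\<lambda>z. c) = (\<lambda>y. 0)"
  by (rule ext) (simp add: pd_const)

lemma Lx_entry_zero: "v \<bullet> grad (\<lambda>z. 0) x - \<epsilon> * lap (\<lambda>z. 0) x = 0"
proof -
  have "grad (\<lambda>z. 0) x = 0" by (simp add: grad_def pd_const vec_eq_iff)
  moreover have "lap (\<lambda>z. 0) x = 0" by (simp add: lap_def pd_const_fun pd_const)
  ultimately show ?thesis by simp
qed

lemma Ax_Ztilde:
  fixes C :: "real^'d::finite \<Rightarrow> real^('n::finite \<times> 'd)^('n \<times> 'd)"
  assumes op: "open \<Omega>" and CZ: "\<forall>x\<in>\<Omega>. C x \<in> Zset" and x: "x \<in> \<Omega>"
  shows "Ax u \<epsilon> t C x \<in> Ztilde"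
proof -
  let ?L = "Lx_mat u \<epsilon> t C x"
  have bd: "block_diag ?L" unfolding block_diag_def
  proof (intro allI impI)
    fix i a j b assume ij: "(i::'n) \<noteq> j"
    have "\<forall>z\<in>\<Omega>. C z $ (i,a) $ (j,b) = 0" using CZ ij by (auto simp: Zset_def block_diag_def)
    then show "?L $ (i,a) $ (j,b) = 0"
      unfolding Lx_mat_def using Lx_entry_local[OF op x, of "\<lambda>z. C z $ (i,a) $ (j,b)" "\<lambda>z. 0"] Lx_entry_zero
      by simp
  qed
  have sy: "transpose ?L = ?L"
  proof -
    have "?L $ j $ i = ?L $ i $ j" for i j
    proof -
      have "\<forall>z\<in>\<Omega>. C z $ j $ i = C z $ i $ j"
        using CZ by (auto simp: Zset_def) (metis transpose_nth)
      then show ?thesis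
        unfolding Lx_mat_def using Lx_entry_local[OF op x, of "\<lambda>z. C z $ j $ i" "\<lambda>z. C z $ i $ j"] by simp
    qed
    then show ?thesis by (simp add: vec_eq_iff transpose_nth)
  qed
  show ?thesis unfolding Ax_def using Ztilde_sand[OF _ bd sy] CZ x by blast
qed

lemma transpose_lin: "transpose ((A::real^'m::finite^'m) + B) = transpose A + transpose B"
  "transpose (A - B) = transpose A - transpose B" "transpose (c *\<^sub>R A) = c *\<^sub>R transpose A"
  by (simp_all add: vec_eq_iff transpose_nth)

lemma Aq_Ztilde:
  fixes C :: "real^'d::finite \<Rightarrow> real^('n::{finite,linorder} \<times> 'd)^('n \<times> 'd)"
  assumes CZ: "C x \<in> Zset" and Lam: "\<Lambda> = diag_mat lam"
  shows "Aq De \<Lambda> u t C x \<in> Ztilde"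
proof -
  let ?M = "Mmat De \<Lambda> u t x"
  let ?K = "kron_I \<Lambda> :: real^('n \<times> 'd)^('n \<times> 'd)"
  let ?Z = "?M ** C x + C x ** transpose ?M - (1 / De) *\<^sub>R ?K"
  have bK: "block_diag ?K" "transpose ?K = ?K" using kron_diag[of lam] Lam by simp_all
  have bM: "block_diag ?M" unfolding Mmat_def
    by (intro block_diag_diff block_diag_scale bK(1) I_kron_bd)
  have bZ: "block_diag ?Z"
    by (intro block_diag_diff block_diag_add block_diag_mult block_diag_scale block_diag_transpose bM bK(1)
        Zset_props(4)[OF CZ])
  have sZ: "transpose ?Z = ?Z"
    unfolding transpose_lin matrix_transpose_mul transpose_transpose Zset_props(3)[OF CZ] bK(2)
    by simp
  show ?thesis unfolding Aq_def by (rule Ztilde_sand[OF CZ bZ sZ])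
qed

theorem lemma1:
  fixes \<Omega> :: "(real^'d) set"
    and \<Lambda> :: "real^('n::{finite,linorder})^('n::{finite,linorder})"
    and lam :: "real^('n::{finite,linorder})"
    and u :: "real \<Rightarrow> real^'d \<Rightarrow> real^'d"
    and C :: "real^'d \<Rightarrow> real^(('n::{finite,linorder}) \<times> 'd)^(('n::{finite,linorder}) \<times> 'd)"
    and f :: "((real^'d) \<times> (real^(('n::{finite,linorder}) \<times> 'd))) \<Rightarrow> real"
    and De \<epsilon> t :: real
  assumes dom: "lipschitz_domain \<Omega>" "bounded \<Omega>"
    and Lam: "\<Lambda> = diag_mat lam" "\<exists>Q. orthogonal_matrix Q \<and> rouse = transpose Q ** \<Lambda> ** Q"
    and De: "De > 0" and eps: "\<epsilon> \<ge> 0"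
    and u: "smooth_on \<Omega> (u t)"
    and C: "\<forall>x\<in>\<Omega>. C x \<in> Zset" "smooth_on \<Omega> C"
    and f: "f \<in> M_Phi \<Omega>" "\<forall>x\<in>\<Omega>. \<forall>q. f (x,q) = Phi (C x) q"
  shows
    "(tangent_space \<Omega> f =
       {\<phi> \<in> Hspace \<Omega>. \<exists>A. (\<forall>x\<in>\<Omega>. A x \<in> Ztilde) \<and>
          (\<forall>x\<in>\<Omega>. \<forall>q. \<phi> (x,q) = (q \<bullet> (A x *v q) - trace (A x ** C x)) * f (x,q))}) \<and>
    ((\<forall>x\<in>\<Omega>. Aq De \<Lambda> u t C x \<in> Ztilde) \<and>
     (\<forall>x\<in>\<Omega>. \<forall>q. Lq De \<Lambda> u t f (x,q) =
        (q \<bullet> (Aq De \<Lambda> u t C x *v q) - trace (Aq De \<Lambda> u t C x ** C x)) * f (x,q)) \<and>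
     (Lq De \<Lambda> u t f \<in> Hspace \<Omega> \<longrightarrow> Lq De \<Lambda> u t f \<in> tangent_space \<Omega> f)) \<and>
    ((\<forall>x\<in>\<Omega>. Ax u \<epsilon> t C x \<in> Ztilde) \<and>
     (\<forall>x\<in>\<Omega>. \<forall>q. Lx u \<epsilon> t f (x,q) =
        (q \<bullet> (Ax u \<epsilon> t C x *v q) - trace (Ax u \<epsilon> t C x ** C x)) * f (x,q)
        + \<epsilon> * rho C x q * f (x,q)) \<and>
     (\<epsilon> = 0 \<and> Lx u \<epsilon> t f \<in> Hspace \<Omega> \<longrightarrow> Lx u \<epsilon> t f \<in> tangent_space \<Omega> f))"
proof -
  have op: "open \<Omega>" using dom(1) unfolding lipschitz_domain_def by blast
  note CZ = C(1) and sm = C(2) and fC = f(2)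
  have i: "tangent_space \<Omega> f =
       {\<phi> \<in> Hspace \<Omega>. \<exists>A. (\<forall>x\<in>\<Omega>. A x \<in> Ztilde) \<and>
          (\<forall>x\<in>\<Omega>. \<forall>q. \<phi> (x,q) = (q \<bullet> (A x *v q) - trace (A x ** C x)) * f (x,q))}"
  proof (rule set_eqI, rule iffI)
    fix \<phi> assume h: "\<phi> \<in> tangent_space \<Omega> f"
    then have "\<phi> \<in> Hspace \<Omega>" unfolding tangent_space_def by blast
    then show "\<phi> \<in> {\<phi> \<in> Hspace \<Omega>. \<exists>A. (\<forall>x\<in>\<Omega>. A x \<in> Ztilde) \<and>
          (\<forall>x\<in>\<Omega>. \<forall>q. \<phi> (x,q) = (q \<bullet> (A x *v q) - trace (A x ** C x)) * f (x,q))}"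
      using tangent_sub[OF CZ fC h] by blast
  next
    fix \<phi> assume "\<phi> \<in> {\<phi> \<in> Hspace \<Omega>. \<exists>A. (\<forall>x\<in>\<Omega>. A x \<in> Ztilde) \<and>
          (\<forall>x\<in>\<Omega>. \<forall>q. \<phi> (x,q) = (q \<bullet> (A x *v q) - trace (A x ** C x)) * f (x,q))}"
    then obtain A where H: "\<phi> \<in> Hspace \<Omega>" and AZ: "\<forall>x\<in>\<Omega>. A x \<in> Ztilde"
      and Aeq: "\<forall>x\<in>\<Omega>. \<forall>q. \<phi> (x,q) = (q \<bullet> (A x *v q) - trace (A x ** C x)) * f (x,q)" by blast
    show "\<phi> \<in> tangent_space \<Omega> f" by (rule tangent_sup[OF CZ fC H AZ Aeq])
  qed
  have AqZ: "\<forall>x\<in>\<Omega>. Aq De \<Lambda> u t C x \<in> Ztilde"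
    using Aq_Ztilde[OF _ Lam(1)] CZ by blast
  have Lqf: "\<forall>x\<in>\<Omega>. \<forall>q. Lq De \<Lambda> u t f (x,q) =
        (q \<bullet> (Aq De \<Lambda> u t C x *v q) - trace (Aq De \<Lambda> u t C x ** C x)) * f (x,q)"
  proof (intro ballI allI)
    fix x q assume x: "x \<in> \<Omega>"
    have CZx: "C x \<in> Zset" using CZ x by blast
    have fe: "(\<lambda>q''. f (x,q'')) = Phi (C x)" using fC x by auto
    have "Lq De \<Lambda> u t f (x,q) = - (\<Sum>k\<in>UNIV. pd k (\<lambda>q'. (Mmat De \<Lambda> u t x *v q') $ k * Phi (C x) q'
          + (1 / (2 * De)) * ((kron_I \<Lambda> :: real^('n \<times> 'd)^('n \<times> 'd)) *v grad (Phi (C x)) q') $ k) q)"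
      unfolding Lq_def Let_def fst_conv snd_conv fe[symmetric] by simp
    also have "\<dots> = (((Mmat De \<Lambda> u t x - (1 / (2 * De)) *\<^sub>R (kron_I \<Lambda> ** matrix_inv (C x))) *v q) \<bullet> (matrix_inv (C x) *v q)
        - trace (Mmat De \<Lambda> u t x - (1 / (2 * De)) *\<^sub>R (kron_I \<Lambda> ** matrix_inv (C x)))) * Phi (C x) q"
      by (rule Lq_gen[OF CZx])
    also have "\<dots> = (q \<bullet> (Aq De \<Lambda> u t C x *v q) - trace (Aq De \<Lambda> u t C x ** C x)) * f (x,q)"
      unfolding Aq_def Aq_alg[OF Zset_props(9,10,5)[OF CZx]] using fC x by simp
    finally show "Lq De \<Lambda> u t f (x,q) =
        (q \<bullet> (Aq De \<Lambda> u t C x *v q) - trace (Aq De \<Lambda> u t C x ** C x)) * f (x,q)" .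
  qed
  have ii3: "Lq De \<Lambda> u t f \<in> Hspace \<Omega> \<longrightarrow> Lq De \<Lambda> u t f \<in> tangent_space \<Omega> f"
    using tangent_sup[OF CZ fC _ AqZ Lqf] by blast
  have AxZ: "\<forall>x\<in>\<Omega>. Ax u \<epsilon> t C x \<in> Ztilde" using Ax_Ztilde[OF op CZ] by blast
  have Lxf: "\<forall>x\<in>\<Omega>. \<forall>q. Lx u \<epsilon> t f (x,q) =
        (q \<bullet> (Ax u \<epsilon> t C x *v q) - trace (Ax u \<epsilon> t C x ** C x)) * f (x,q)
        + \<epsilon> * rho C x q * f (x,q)"
    using partiii[OF op CZ fC sm] by blast
  have iii3: "\<epsilon> = 0 \<and> Lx u \<epsilon> t f \<in> Hspace \<Omega> \<longrightarrow> Lx u \<epsilon> t f \<in> tangent_space \<Omega> f"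
  proof
    assume h: "\<epsilon> = 0 \<and> Lx u \<epsilon> t f \<in> Hspace \<Omega>"
    have "\<forall>x\<in>\<Omega>. \<forall>q. Lx u \<epsilon> t f (x,q) = (q \<bullet> (Ax u \<epsilon> t C x *v q) - trace (Ax u \<epsilon> t C x ** C x)) * f (x,q)"
      using Lxf h by simp
    then show "Lx u \<epsilon> t f \<in> tangent_space \<Omega> f"
      using tangent_sup[OF CZ fC _ AxZ] h by blast
  qed
  show ?thesis using i AqZ Lqf ii3 AxZ Lxf iii3 by blast
qed


end
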